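(* Let $M\subseteq\mathbb{C}^n$ and $S\subseteq\mathbb{C}^n$ be complex domains endowed with rotation invariant Kähler forms $\omega_\Phi$ and $\omega_\Xi$ with associated functions $\tilde\Phi:\tilde M\to\mathbb{R}$ and $\tilde\Xi:\tilde S\to\mathbb{R}$ respectively. A special map $\Psi:M\to S$, $\Psi(z)=(\tilde\psi_1(x)z_1,\dots,\tilde\psi_n(x)z_n)$, satisfies $\Psi^*(\omega_\Xi)=\omega_\Phi$ if and only if there exist constants $c_k\in\mathbb{R}$ such that on $\tilde M$ $$\tilde\psi_k^2\,\frac{\partial\tilde\Xi}{\partial x_k}(\tilde\psi_1^2x_1,\dots,\tilde\psi_n^2x_n)=\frac{\partial\tilde\Phi}{\partial x_k}+\frac{c_k}{x_k},\qquad k=1,\dots,n.$$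
   Context: Let $z_1,\dots,z_n$ be the standard complex coordinates on $\mathbb{C}^n$ and $x_j=|z_j|^2$. For a domain $M\subseteq\mathbb{C}^n$ set $\tilde M=\{x\in\mathbb{R}^n:\ x_j=|z_j|^2,\ z\in M\}$ (similarly $\tilde S$). A Kähler form $\omega_\Phi=\frac{i}{2}\partial\bar\partial\Phi$ on $M$ ($\Phi$ smooth real) is rotation invariant with associated function $\tilde\Phi$ if $\tilde\Phi:\tilde M\to\mathbb{R}$ is smooth and $\Phi(z)=\tilde\Phi(|z_1|^2,\dots,|z_n|^2)$. A special map $\Psi:M\to S$ is a smooth map of the form $\Psi(z)=(\tilde\psi_1(x)z_1,\dots,\tilde\psi_n(x)z_n)$ with $\tilde\psi_j:\tilde M\to\mathbb{R}$ real functions. *)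

theory Defs
  imports "HOL-Analysis.Analysis"
begin

text \<open>Points of C^n are modelled as complex^'n, points of R^n as real^'n
  (n = CARD('n), arbitrary and fixed).\<close>

definition is_domain :: "'a::topological_space set \<Rightarrow> bool" where
  "is_domain U \<longleftrightarrow> open U \<and> connected U \<and> U \<noteq> {}"

fun Ck_on :: "nat \<Rightarrow> 'a::real_normed_vector set \<Rightarrow> ('a \<Rightarrow> 'b::real_normed_vector) \<Rightarrow> bool" where
  "Ck_on 0 U f \<longleftrightarrow> continuous_on U f"
| "Ck_on (Suc k) U f \<longleftrightarrow> f differentiable_on U \<and>
      (\<forall>v. Ck_on k U (\<lambda>x. frechet_derivative f (at x) v))"

definition smooth_on :: "'a::real_normed_vector set \<Rightarrow> ('a \<Rightarrow> 'b::real_normed_vector) \<Rightarrow> bool" where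
  "smooth_on U f \<longleftrightarrow> (\<forall>k. Ck_on k U f)"

definition smooth_on_set :: "'a::real_normed_vector set \<Rightarrow> ('a \<Rightarrow> 'b::real_normed_vector) \<Rightarrow> bool" where
  "smooth_on_set A f \<longleftrightarrow> (\<exists>U g. open U \<and> A \<subseteq> U \<and> smooth_on U g \<and> (\<forall>x\<in>A. g x = f x))"

definition sqmod :: "complex^'n \<Rightarrow> real^'n" where
  "sqmod z = (\<chi> j. (cmod (z $ j))\<^sup>2)"

definition tilde :: "(complex^'n) set \<Rightarrow> (real^'n) set" where
  "tilde M = sqmod ` M"

definition rot_inv_assoc :: "(complex^'n) set \<Rightarrow> (complex^'n \<Rightarrow> real) \<Rightarrow> (real^'n \<Rightarrow> real) \<Rightarrow> bool" where
  "rot_inv_assoc M Phi Phit \<longleftrightarrow> smooth_on_set (tilde M) Phit \<and> (\<forall>z\<in>M. Phi z = Phit (sqmod z))"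

text \<open>Wirtinger derivatives of a complex-valued function on C^n
  (z_j = u_j + i v_j; d/dz_j = (d/du_j - i d/dv_j)/2, d/dzbar_j = (d/du_j + i d/dv_j)/2).\<close>
definition dz :: "'n \<Rightarrow> (complex^'n \<Rightarrow> complex) \<Rightarrow> complex^'n \<Rightarrow> complex" where
  "dz j f p = (frechet_derivative f (at p) (axis j 1) - \<i> * frechet_derivative f (at p) (axis j \<i>)) / 2"

definition dzbar :: "'n \<Rightarrow> (complex^'n \<Rightarrow> complex) \<Rightarrow> complex^'n \<Rightarrow> complex" where
  "dzbar j f p = (frechet_derivative f (at p) (axis j 1) + \<i> * frechet_derivative f (at p) (axis j \<i>)) / 2"

text \<open>The real 2-form omega_Phi = (i/2) d dbar Phi = (i/2) sum_{j,k} Phi_{j kbar} dz_j /\ dzbar_k,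
  evaluated at the point p on the real tangent vectors X, Y in C^n
  (dz_j /\ dzbar_k (X,Y) = X_j conj(Y_k) - Y_j conj(X_k)).  The value is real; Re is only a
  type conversion.\<close>
definition kahler_form :: "(complex^'n \<Rightarrow> real) \<Rightarrow> complex^'n \<Rightarrow> complex^'n \<Rightarrow> complex^'n \<Rightarrow> real" where
  "kahler_form Phi p X Y = Re ((\<i> / 2) * (\<Sum>j\<in>UNIV. \<Sum>k\<in>UNIV.
      dz j (dzbar k (\<lambda>q. complex_of_real (Phi q))) p *
      (X $ j * cnj (Y $ k) - Y $ j * cnj (X $ k))))"

text \<open>omega_Phi is a Kaehler form on M: the associated metric omega(X, JX) is positive definite.\<close>
definition is_kahler_on :: "(complex^'n) set \<Rightarrow> (complex^'n \<Rightarrow> real) \<Rightarrow> bool" where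
  "is_kahler_on M Phi \<longleftrightarrow> smooth_on M Phi \<and>
     (\<forall>p\<in>M. \<forall>X. X \<noteq> 0 \<longrightarrow> kahler_form Phi p X (\<chi> j. \<i> * X $ j) > 0)"

definition pullback :: "('a::real_normed_vector \<Rightarrow> 'b::real_normed_vector) \<Rightarrow> ('b \<Rightarrow> 'b \<Rightarrow> 'b \<Rightarrow> real)
     \<Rightarrow> 'a \<Rightarrow> 'a \<Rightarrow> 'a \<Rightarrow> real" where
  "pullback F w p X Y = w (F p) (frechet_derivative F (at p) X) (frechet_derivative F (at p) Y)"

definition special_map :: "('n \<Rightarrow> real^'n \<Rightarrow> real) \<Rightarrow> complex^'n \<Rightarrow> complex^'n" where
  "special_map psi z = (\<chi> j. complex_of_real (psi j (sqmod z)) * z $ j)"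

definition pdx :: "'n \<Rightarrow> (real^'n \<Rightarrow> real) \<Rightarrow> real^'n \<Rightarrow> real" where
  "pdx k f x = frechet_derivative f (at x) (axis k 1)"

end

theory Submission
  imports Defs
begin


abbreviation fd where "fd f x \<equiv> frechet_derivative f (at x)"

lemma fd_works: "f differentiable (at x) \<Longrightarrow> (f has_derivative fd f x) (at x)"
  using frechet_derivative_works by blast

lemma fd_eq: "(f has_derivative f') (at x) \<Longrightarrow> fd f x = f'"
  using frechet_derivative_at by metis

lemma diff_open: "open U \<Longrightarrow> f differentiable_on U \<Longrightarrow> x\<in>U \<Longrightarrow> f differentiable (at x)"
  by (simp add: differentiable_on_eq_differentiable_at)

lemma fd_local:
  assumes "open U" "x \<in> U" "\<And>y. y\<in>U \<Longrightarrow> f y = g y" "f differentiable (at x)"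
  shows "fd g x = fd f x" "g differentiable (at x)"
proof -
  have "(g has_derivative fd f x) (at x)"
    using has_derivative_transform_within_open[OF fd_works[OF assms(4)] assms(1,2)] assms(3) by blast
  then show "fd g x = fd f x" "g differentiable (at x)"
    using fd_eq differentiable_def by blast+
qed

lemma Ck_cong:
  assumes "open U" "\<And>x. x\<in>U \<Longrightarrow> f x = g x" "Ck_on k U f"
  shows "Ck_on k U g"
  using assms(2,3)
proof (induction k arbitrary: f g)
  case 0
  then show ?case using continuous_on_cong by force
next
  case (Suc k)
  have df: "f differentiable_on U" using Suc.prems by simp
  have dg: "\<And>x. x\<in>U \<Longrightarrow> g differentiable (at x)" "\<And>x. x\<in>U \<Longrightarrow> fd g x = fd f x"
    using fd_local[OF assms(1) _ Suc.prems(1) diff_open[OF assms(1) df]] by auto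
  show ?case
  proof (simp only: Ck_on.simps, intro conjI allI)
    show "g differentiable_on U"
      using dg(1) assms(1) by (simp add: differentiable_on_eq_differentiable_at)
    fix v
    show "Ck_on k U (\<lambda>x. fd g x v)"
      by (rule Suc.IH[of "\<lambda>x. fd f x v"]) (use dg(2) Suc.prems in auto)
  qed
qed

lemma Ck_lin:
  assumes L: "bounded_linear L" and U: "open U"
  shows "Ck_on k U f \<Longrightarrow> Ck_on k U (\<lambda>x. L (f x))"
proof (induction k arbitrary: f)
  case 0
  then show ?case using L by (auto intro: continuous_on_compose2[of UNIV L] linear_continuous_on)
next
  case (Suc k)
  have df: "\<And>x. x\<in>U \<Longrightarrow> f differentiable (at x)" using Suc.prems diff_open[OF U] by auto
  have hd: "\<And>x. x\<in>U \<Longrightarrow> ((\<lambda>x. L (f x)) has_derivative (\<lambda>h. L (fd f x h))) (at x)"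
    using bounded_linear.has_derivative[OF L fd_works[OF df]] by blast
  show ?case
  proof (simp only: Ck_on.simps, intro conjI allI)
    show "(\<lambda>x. L (f x)) differentiable_on U"
      using hd U by (auto simp: differentiable_on_eq_differentiable_at differentiable_def)
    fix v
    have "Ck_on k U (\<lambda>x. L (fd f x v))" using Suc by simp
    then show "Ck_on k U (\<lambda>x. fd (\<lambda>x. L (f x)) x v)"
      by (rule Ck_cong[OF U, rotated]) (simp add: hd[THEN fd_eq])
  qed
qed

lemma line_deriv:
  fixes g :: "'a::real_normed_vector \<Rightarrow> real"
  assumes "g differentiable (at (q + s *\<^sub>R v))"
  shows "((\<lambda>s. g (q + s *\<^sub>R v)) has_real_derivative fd g (q + s *\<^sub>R v) v) (at s)"
proof -
  have "((\<lambda>s. q + s *\<^sub>R v) has_derivative (\<lambda>t. t *\<^sub>R v)) (at s)"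
    by (auto intro!: derivative_eq_intros)
  from has_derivative_compose[OF this fd_works[OF assms]]
  have "((\<lambda>s. g (q + s *\<^sub>R v)) has_derivative (\<lambda>t. fd g (q + s *\<^sub>R v) (t *\<^sub>R v))) (at s)" .
  moreover have "linear (fd g (q + s *\<^sub>R v))"
    using fd_works[OF assms] has_derivative_linear by blast
  ultimately have "((\<lambda>s. g (q + s *\<^sub>R v)) has_derivative (\<lambda>t. t * fd g (q + s *\<^sub>R v) v)) (at s)"
    by (simp add: linear_scale)
  moreover have "(\<lambda>t. t * fd g (q + s *\<^sub>R v) v) = (*) (fd g (q + s *\<^sub>R v) v)"
    by (rule ext) simp
  ultimately show ?thesis
    by (simp add: has_field_derivative_def)
qed

lemma schwarz_step:
  fixes f :: "'a::real_normed_vector \<Rightarrow> real"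
  assumes h: "h > 0" and inU: "\<And>s t. 0 \<le> s \<Longrightarrow> s \<le> h \<Longrightarrow> 0 \<le> t \<Longrightarrow> t \<le> h \<Longrightarrow> p + s *\<^sub>R v + t *\<^sub>R w \<in> U"
    and df: "\<And>x. x\<in>U \<Longrightarrow> f differentiable (at x)"
    and dv: "\<And>x. x\<in>U \<Longrightarrow> (\<lambda>x. fd f x v) differentiable (at x)"
  shows "\<exists>s t. 0 \<le> s \<and> s \<le> h \<and> 0 \<le> t \<and> t \<le> h \<and>
     f (p + h *\<^sub>R v + h *\<^sub>R w) - f (p + h *\<^sub>R v) - f (p + h *\<^sub>R w) + f p
       = h * h * fd (\<lambda>y. fd f y v) (p + s *\<^sub>R v + t *\<^sub>R w) w"
proof -
  define \<phi> where "\<phi> s = f ((p + h *\<^sub>R w) + s *\<^sub>R v) - f (p + s *\<^sub>R v)" for s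
  have "\<exists>z. 0 < z \<and> z < h \<and> \<phi> h - \<phi> 0 = (h - 0) * (fd f ((p + h *\<^sub>R w) + z *\<^sub>R v) v - fd f (p + z *\<^sub>R v) v)"
  proof (rule MVT2[OF h])
    fix x assume x: "0 \<le> x" "x \<le> h"
    have a: "(p + h *\<^sub>R w) + x *\<^sub>R v \<in> U" using inU[of x h] x h by (simp add: algebra_simps)
    have b: "p + x *\<^sub>R v \<in> U" using inU[of x 0] x h by simp
    show "(\<phi> has_real_derivative (fd f ((p + h *\<^sub>R w) + x *\<^sub>R v) v - fd f (p + x *\<^sub>R v) v)) (at x)"
      unfolding \<phi>_def by (intro derivative_intros line_deriv df a b)
  qed
  then obtain s where s: "0 < s" "s < h"
    and s1: "\<phi> h - \<phi> 0 = h * (fd f ((p + h *\<^sub>R w) + s *\<^sub>R v) v - fd f (p + s *\<^sub>R v) v)" by auto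
  define g where "g y = fd f y v" for y
  have "\<exists>z. 0 < z \<and> z < h \<and> g ((p + s *\<^sub>R v) + h *\<^sub>R w) - g ((p + s *\<^sub>R v) + 0 *\<^sub>R w)
       = (h - 0) * fd g ((p + s *\<^sub>R v) + z *\<^sub>R w) w"
  proof (rule MVT2[OF h])
    fix x assume x: "0 \<le> x" "x \<le> h"
    have a: "(p + s *\<^sub>R v) + x *\<^sub>R w \<in> U" using inU[of s x] x s by simp
    show "((\<lambda>x. g ((p + s *\<^sub>R v) + x *\<^sub>R w)) has_real_derivative fd g ((p + s *\<^sub>R v) + x *\<^sub>R w) w) (at x)"
      by (rule line_deriv) (use dv[OF a] g_def in \<open>simp add: fun_eq_iff\<close>)
  qed
  then obtain t where t: "0 < t" "t < h"
    and t1: "g ((p + s *\<^sub>R v) + h *\<^sub>R w) - g ((p + s *\<^sub>R v) + 0 *\<^sub>R w) = h * fd g ((p + s *\<^sub>R v) + t *\<^sub>R w) w"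
    by auto
  have e1: "p + h *\<^sub>R w + s *\<^sub>R v = (p + s *\<^sub>R v) + h *\<^sub>R w" by (simp add: algebra_simps)
  have "f (p + h *\<^sub>R v + h *\<^sub>R w) - f (p + h *\<^sub>R v) - f (p + h *\<^sub>R w) + f p = \<phi> h - \<phi> 0"
    unfolding \<phi>_def by (simp add: algebra_simps)
  also have "\<dots> = h * (g ((p + s *\<^sub>R v) + h *\<^sub>R w) - g ((p + s *\<^sub>R v) + 0 *\<^sub>R w))"
    unfolding s1 g_def e1 by simp
  also have "\<dots> = h * h * fd (\<lambda>y. fd f y v) (p + s *\<^sub>R v + t *\<^sub>R w) w"
    using t1 unfolding g_def by simp
  finally show ?thesis using s t by (intro exI[of _ s] exI[of _ t]) auto
qed

lemma schwarz:
  fixes f :: "'a::real_normed_vector \<Rightarrow> real"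
  assumes U: "open U" "p \<in> U"
    and df: "\<And>x. x\<in>U \<Longrightarrow> f differentiable (at x)"
    and dv: "\<And>x. x\<in>U \<Longrightarrow> (\<lambda>x. fd f x v) differentiable (at x)"
    and dw: "\<And>x. x\<in>U \<Longrightarrow> (\<lambda>x. fd f x w) differentiable (at x)"
    and cvw: "continuous_on U (\<lambda>x. fd (\<lambda>y. fd f y v) x w)"
    and cwv: "continuous_on U (\<lambda>x. fd (\<lambda>y. fd f y w) x v)"
  shows "fd (\<lambda>y. fd f y v) p w = fd (\<lambda>y. fd f y w) p v"
proof (rule ccontr)
  define E1 where "E1 x = fd (\<lambda>y. fd f y v) x w" for x
  define E2 where "E2 x = fd (\<lambda>y. fd f y w) x v" for x
  assume ne: "fd (\<lambda>y. fd f y v) p w \<noteq> fd (\<lambda>y. fd f y w) p v"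
  define e where "e = \<bar>E1 p - E2 p\<bar> / 2"
  have e: "e > 0" using ne by (simp add: e_def E1_def E2_def)
  have c1: "isCont E1 p" using cvw U unfolding E1_def by (simp add: continuous_on_eq_continuous_at)
  have c2: "isCont E2 p" using cwv U unfolding E2_def by (simp add: continuous_on_eq_continuous_at)
  obtain d1 where d1: "d1 > 0" "\<And>y. dist y p < d1 \<Longrightarrow> dist (E1 y) (E1 p) < e"
    using c1 e unfolding continuous_at_eps_delta by blast
  obtain d2 where d2: "d2 > 0" "\<And>y. dist y p < d2 \<Longrightarrow> dist (E2 y) (E2 p) < e"
    using c2 e unfolding continuous_at_eps_delta by blast
  obtain r where r: "r > 0" "ball p r \<subseteq> U" using U open_contains_ball by blast
  define d where "d = min r (min d1 d2)"
  have d: "d > 0" using r d1 d2 by (simp add: d_def)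
  define h where "h = d / (2 * (norm v + norm w + 1))"
  have h: "h > 0" using d unfolding h_def
    by (intro divide_pos_pos) (auto intro: add_pos_nonneg add_nonneg_pos)
  have hd: "h * (norm v + norm w) < d"
  proof -
    have "h * (norm v + norm w) \<le> h * (norm v + norm w + 1)" using h by simp
    also have "\<dots> = d / 2"
    proof -
      have np: "norm v + norm w + 1 > 0" by (auto intro: add_pos_nonneg add_nonneg_pos)
      then show ?thesis unfolding h_def by (simp add: field_simps)
    qed
    finally show ?thesis using d by simp
  qed
  have close: "dist (p + s *\<^sub>R a + t *\<^sub>R b) p < d"
    if "0 \<le> s" "s \<le> h" "0 \<le> t" "t \<le> h" "(a = v \<and> b = w) \<or> (a = w \<and> b = v)" for s t a b
  proof -
    have "dist (p + s *\<^sub>R a + t *\<^sub>R b) p = norm (s *\<^sub>R a + t *\<^sub>R b)" by (simp add: dist_norm)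
    also have "\<dots> \<le> s * norm a + t * norm b"
      using norm_triangle_ineq[of "s *\<^sub>R a" "t *\<^sub>R b"] that by simp
    also have "\<dots> \<le> h * norm a + h * norm b"
      using that by (intro add_mono mult_right_mono) auto
    also have "\<dots> = h * (norm v + norm w)" using that by (auto simp: algebra_simps)
    finally show ?thesis using hd by simp
  qed
  have inU: "p + s *\<^sub>R a + t *\<^sub>R b \<in> U"
    if "0 \<le> s" "s \<le> h" "0 \<le> t" "t \<le> h" "(a = v \<and> b = w) \<or> (a = w \<and> b = v)" for s t a b
    using close[OF that] r(2) by (auto simp: d_def dist_commute)
  obtain s1 t1 where st1: "0 \<le> s1" "s1 \<le> h" "0 \<le> t1" "t1 \<le> h"
    and eq1: "f (p + h *\<^sub>R v + h *\<^sub>R w) - f (p + h *\<^sub>R v) - f (p + h *\<^sub>R w) + f p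
       = h * h * E1 (p + s1 *\<^sub>R v + t1 *\<^sub>R w)"
    using schwarz_step[OF h, of p v w U f] inU df dv unfolding E1_def by blast
  obtain s2 t2 where st2: "0 \<le> s2" "s2 \<le> h" "0 \<le> t2" "t2 \<le> h"
    and eq2: "f (p + h *\<^sub>R w + h *\<^sub>R v) - f (p + h *\<^sub>R w) - f (p + h *\<^sub>R v) + f p
       = h * h * E2 (p + s2 *\<^sub>R w + t2 *\<^sub>R v)"
    using schwarz_step[OF h, of p w v U f] inU df dw unfolding E2_def by blast
  have "p + h *\<^sub>R w + h *\<^sub>R v = p + h *\<^sub>R v + h *\<^sub>R w" by (simp add: algebra_simps)
  with eq1 eq2 have "h * h * E1 (p + s1 *\<^sub>R v + t1 *\<^sub>R w) = h * h * E2 (p + s2 *\<^sub>R w + t2 *\<^sub>R v)"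
    by (simp add: algebra_simps)
  with h have eqE: "E1 (p + s1 *\<^sub>R v + t1 *\<^sub>R w) = E2 (p + s2 *\<^sub>R w + t2 *\<^sub>R v)" by simp
  have a1: "dist (E1 (p + s1 *\<^sub>R v + t1 *\<^sub>R w)) (E1 p) < e"
    using d1(2) close[OF st1] by (auto simp: d_def)
  have a2: "dist (E2 (p + s2 *\<^sub>R w + t2 *\<^sub>R v)) (E2 p) < e"
    using d2(2) close[OF st2] by (auto simp: d_def)
  have "\<bar>E1 p - E2 p\<bar> < 2 * e" using a1 a2 eqE by (simp add: dist_real_def)
  then show False by (simp add: e_def)
qed

lemma Ck2_iff: "Ck_on 2 U f \<longleftrightarrow> f differentiable_on U \<and>
   (\<forall>v. (\<lambda>x. fd f x v) differentiable_on U \<and> (\<forall>w. continuous_on U (\<lambda>x. fd (\<lambda>y. fd f y v) x w)))"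
  by (simp add: numeral_2_eq_2)

lemma Ck1_iff: "Ck_on 1 U f \<longleftrightarrow> f differentiable_on U \<and> (\<forall>v. continuous_on U (\<lambda>x. fd f x v))"
  by simp

lemma smooth_Ck: "smooth_on U f \<Longrightarrow> Ck_on k U f"
  by (simp add: smooth_on_def)

lemma schwarz_C2:
  fixes f :: "'a::real_normed_vector \<Rightarrow> real"
  assumes "open U" "p \<in> U" "Ck_on 2 U f"
  shows "fd (\<lambda>y. fd f y v) p w = fd (\<lambda>y. fd f y w) p v"
  using assms by (intro schwarz[of U]) (auto simp: Ck2_iff diff_open)

lemma fd_inner:
  fixes g :: "'a::real_normed_vector \<Rightarrow> 'b::real_inner"
  assumes "g differentiable (at x)"
  shows "fd (\<lambda>y. g y \<bullet> b) x v = fd g x v \<bullet> b"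
proof -
  have "((\<lambda>y. g y \<bullet> b) has_derivative (\<lambda>h. fd g x h \<bullet> b)) (at x)"
    using bounded_linear.has_derivative[OF bounded_linear_inner_left fd_works[OF assms]] .
  then show ?thesis using fd_eq by metis
qed

lemma schwarz_vec:
  fixes f :: "'a::real_normed_vector \<Rightarrow> 'b::euclidean_space"
  assumes U: "open U" "p \<in> U" and C: "Ck_on 2 U f"
  shows "fd (\<lambda>y. fd f y v) p w = fd (\<lambda>y. fd f y w) p v"
proof (rule euclidean_eqI)
  fix b :: 'b assume "b \<in> Basis"
  have C2: "Ck_on 2 U (\<lambda>x. f x \<bullet> b)" using Ck_lin[OF bounded_linear_inner_left U(1) C] .
  have df: "\<And>x. x\<in>U \<Longrightarrow> f differentiable (at x)" using C U by (auto simp: Ck2_iff diff_open)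
  have dfv: "\<And>x u. x\<in>U \<Longrightarrow> (\<lambda>x. fd f x u) differentiable (at x)"
    using C U by (auto simp: Ck2_iff diff_open)
  have e: "fd (\<lambda>y. fd (\<lambda>x. f x \<bullet> b) y u) p z = fd (\<lambda>y. fd f y u) p z \<bullet> b" for u z
  proof -
    have d1: "(\<lambda>y. fd f y u \<bullet> b) differentiable (at p)"
      using bounded_linear.has_derivative[OF bounded_linear_inner_left fd_works[OF dfv[OF U(2)]]]
      unfolding differentiable_def by blast
    have "fd (\<lambda>y. fd (\<lambda>x. f x \<bullet> b) y u) p = fd (\<lambda>y. fd f y u \<bullet> b) p"
      by (rule fd_local[OF U(1,2) _ d1]) (simp add: fd_inner df)
    then show ?thesis using fd_inner[OF dfv[OF U(2)]] by simp
  qed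
  show "fd (\<lambda>y. fd f y v) p w \<bullet> b = fd (\<lambda>y. fd f y w) p v \<bullet> b"
    using schwarz_C2[OF U C2, of v w] e by simp
qed


definition cJ :: "complex^'n \<Rightarrow> complex^'n" where "cJ X = (\<chi> j. \<i> * X $ j)"

lemma cJ_nth[simp]: "cJ X $ j = \<i> * X $ j" by (simp add: cJ_def)

lemma vec_expand:
  fixes X :: "complex^'n"
  shows "X = (\<Sum>j\<in>UNIV. Re (X$j) *\<^sub>R axis j 1 + Im (X$j) *\<^sub>R axis j \<i>)"
proof (subst vec_eq_iff, intro allI)
  fix i
  have "(\<Sum>j\<in>UNIV. Re (X$j) *\<^sub>R axis j 1 + Im (X$j) *\<^sub>R axis j \<i>) $ i
      = (\<Sum>j\<in>UNIV. if j = i then Re (X$j) *\<^sub>R 1 + Im (X$j) *\<^sub>R \<i> else 0)"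
  proof -
    have "\<And>x. Re (X $ x) *\<^sub>R (if i = x then 1 else 0) + Im (X $ x) *\<^sub>R (if i = x then \<i> else 0)
       = (if x = i then Re (X$x) *\<^sub>R 1 + Im (X$x) *\<^sub>R \<i> else 0)" by auto
    then show ?thesis by (simp add: axis_def)
  qed
  also have "\<dots> = X $ i" by (simp add: complex_eq_iff)
  finally show "X $ i = (\<Sum>j\<in>UNIV. Re (X$j) *\<^sub>R axis j 1 + Im (X$j) *\<^sub>R axis j \<i>) $ i" by simp
qed

lemma lin_expand:
  fixes L :: "complex^'n \<Rightarrow> real"
  assumes "linear L"
  shows "L X = (\<Sum>j\<in>UNIV. Re (X$j) * L (axis j 1) + Im (X$j) * L (axis j \<i>))"
proof -
  have "L X = L (\<Sum>j\<in>UNIV. Re (X$j) *\<^sub>R axis j 1 + Im (X$j) *\<^sub>R axis j \<i>)"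
    using vec_expand[of X] by simp
  also have "\<dots> = (\<Sum>j\<in>UNIV. Re (X$j) * L (axis j 1) + Im (X$j) * L (axis j \<i>))"
    by (simp add: linear_sum[OF assms] linear_add[OF assms] linear_scale[OF assms])
  finally show ?thesis .
qed

lemma bilin_expand:
  fixes B :: "complex^'n \<Rightarrow> complex^'n \<Rightarrow> real"
  assumes l1: "\<And>C. linear (\<lambda>A. B A C)" and l2: "\<And>A. linear (B A)"
  shows "B A C = (\<Sum>j\<in>UNIV. \<Sum>k\<in>UNIV.
      Re (A$j) * Re (C$k) * B (axis j 1) (axis k 1) + Re (A$j) * Im (C$k) * B (axis j 1) (axis k \<i>)
    + Im (A$j) * Re (C$k) * B (axis j \<i>) (axis k 1) + Im (A$j) * Im (C$k) * B (axis j \<i>) (axis k \<i>))"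
proof -
  have "B A C = (\<Sum>j\<in>UNIV. Re (A$j) * B (axis j 1) C + Im (A$j) * B (axis j \<i>) C)"
    using lin_expand[OF l1[of C], of A] by simp
  also have "\<dots> = (\<Sum>j\<in>UNIV. \<Sum>k\<in>UNIV.
      Re (A$j) * Re (C$k) * B (axis j 1) (axis k 1) + Re (A$j) * Im (C$k) * B (axis j 1) (axis k \<i>)
    + Im (A$j) * Re (C$k) * B (axis j \<i>) (axis k 1) + Im (A$j) * Im (C$k) * B (axis j \<i>) (axis k \<i>))"
    by (subst lin_expand[OF l2], subst lin_expand[OF l2])
       (simp add: sum_distrib_left sum.distrib algebra_simps)
  finally show ?thesis .
qed

lemma linear_in_dir:
  fixes L :: "'a::real_normed_vector \<Rightarrow> 'b::real_normed_vector \<Rightarrow> 'c::real_normed_vector"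
  assumes U: "open U" "p \<in> U" and lin: "\<And>y. y \<in> U \<Longrightarrow> linear (L y)"
    and d: "\<And>v. (\<lambda>y. L y v) differentiable (at p)"
  shows "linear (\<lambda>v. fd (\<lambda>y. L y v) p A)"
proof (rule linearI)
  fix v w :: 'b and c :: real
  have "fd (\<lambda>y. L y (v + w)) p = fd (\<lambda>y. L y v + L y w) p"
    by (rule fd_local[OF U _ differentiable_add[OF d d]]) (simp add: lin linear_add)
  also have "\<dots> = (\<lambda>h. fd (\<lambda>y. L y v) p h + fd (\<lambda>y. L y w) p h)"
    by (rule fd_eq) (intro has_derivative_add fd_works d)
  finally show "fd (\<lambda>y. L y (v + w)) p A = fd (\<lambda>y. L y v) p A + fd (\<lambda>y. L y w) p A" by simp
  have "fd (\<lambda>y. L y (c *\<^sub>R v)) p = fd (\<lambda>y. c *\<^sub>R L y v) p"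
    by (rule fd_local[OF U _ differentiable_scaleR[OF differentiable_const d]]) (simp add: lin linear_scale)
  also have "\<dots> = (\<lambda>h. c *\<^sub>R fd (\<lambda>y. L y v) p h)"
    by (rule fd_eq) (intro has_derivative_scaleR_right fd_works d)
  finally show "fd (\<lambda>y. L y (c *\<^sub>R v)) p A = c *\<^sub>R fd (\<lambda>y. L y v) p A" by simp
qed

lemma fd_ofreal:
  assumes "f differentiable (at x)"
  shows "fd (\<lambda>q. complex_of_real (f q)) x v = complex_of_real (fd f x v)"
proof -
  have "((\<lambda>q. complex_of_real (f q)) has_derivative (\<lambda>h. complex_of_real (fd f x h))) (at x)"
    using bounded_linear.has_derivative[OF bounded_linear_of_real fd_works[OF assms]] .
  then show ?thesis using fd_eq by metis
qed

lemma has_derivative_ofreal: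
  assumes "f differentiable (at x)"
  shows "((\<lambda>q. complex_of_real (f q)) has_derivative (\<lambda>h. complex_of_real (fd f x h))) (at x)"
  using bounded_linear.has_derivative[OF bounded_linear_of_real fd_works[OF assms]] .

lemma dz_dzbar:
  fixes F :: "complex^'n \<Rightarrow> real"
  assumes U: "open U" "p \<in> U" and C: "Ck_on 2 U F"
  shows "dz j (dzbar k (\<lambda>q. complex_of_real (F q))) p =
     (complex_of_real (fd (\<lambda>y. fd F y (axis k 1)) p (axis j 1))
      + \<i> * complex_of_real (fd (\<lambda>y. fd F y (axis k \<i>)) p (axis j 1))
      - \<i> * (complex_of_real (fd (\<lambda>y. fd F y (axis k 1)) p (axis j \<i>))
      + \<i> * complex_of_real (fd (\<lambda>y. fd F y (axis k \<i>)) p (axis j \<i>)))) / 4"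
proof -
  have dF: "\<And>y. y \<in> U \<Longrightarrow> F differentiable (at y)" using C U by (auto simp: Ck2_iff diff_open)
  have dFv: "\<And>y v. y \<in> U \<Longrightarrow> (\<lambda>y. fd F y v) differentiable (at y)"
    using C U by (auto simp: Ck2_iff diff_open)
  define G where "G y = (1/2) * (complex_of_real (fd F y (axis k 1)) + \<i> * complex_of_real (fd F y (axis k \<i>)))" for y
  have eqG: "\<And>y. y \<in> U \<Longrightarrow> G y = dzbar k (\<lambda>q. complex_of_real (F q)) y"
    by (simp add: G_def dzbar_def fd_ofreal dF)
  have hG: "(G has_derivative (\<lambda>h. (1/2) * (complex_of_real (fd (\<lambda>y. fd F y (axis k 1)) p h)
      + \<i> * complex_of_real (fd (\<lambda>y. fd F y (axis k \<i>)) p h)))) (at p)"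
    unfolding G_def
    by (intro has_derivative_mult_right has_derivative_add has_derivative_ofreal dFv[OF U(2)])
  have "fd (dzbar k (\<lambda>q. complex_of_real (F q))) p = fd G p"
    by (rule fd_local[OF U eqG]) (use hG in \<open>auto simp: differentiable_def\<close>)
  also have "\<dots> = (\<lambda>h. (1/2) * (complex_of_real (fd (\<lambda>y. fd F y (axis k 1)) p h)
      + \<i> * complex_of_real (fd (\<lambda>y. fd F y (axis k \<i>)) p h)))"
    using hG fd_eq by blast
  finally show ?thesis unfolding dz_def by (simp add: field_simps)
qed

lemma term_id:
  fixes aa ab ba bb :: real and Xj Xk Yj Yk :: complex
  shows "Re (\<i> / 2 * ((complex_of_real aa + \<i> * complex_of_real ab - \<i> * (complex_of_real ba + \<i> * complex_of_real bb)) / 4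
        * (Xj * cnj Yk - Yj * cnj Xk))) =
   ((Re Yj * Re (\<i>*Xk) * aa + Re Yj * Im (\<i>*Xk) * ab + Im Yj * Re (\<i>*Xk) * ba + Im Yj * Im (\<i>*Xk) * bb)
  - (Re Xj * Re (\<i>*Yk) * aa + Re Xj * Im (\<i>*Yk) * ab + Im Xj * Re (\<i>*Yk) * ba + Im Xj * Im (\<i>*Yk) * bb)
  + (Re (\<i>*Xj) * Re Yk * aa + Re (\<i>*Xj) * Im Yk * ab + Im (\<i>*Xj) * Re Yk * ba + Im (\<i>*Xj) * Im Yk * bb)
  - (Re (\<i>*Yj) * Re Xk * aa + Re (\<i>*Yj) * Im Xk * ab + Im (\<i>*Yj) * Re Xk * ba + Im (\<i>*Yj) * Im Xk * bb)) / 8"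
  by (simp add: field_simps)

lemma kahler_formula:
  fixes F :: "complex^'n \<Rightarrow> real"
  assumes U: "open U" "p \<in> U" and C: "Ck_on 2 U F"
  shows "kahler_form F p X Y = (fd (\<lambda>y. fd F y (cJ X)) p Y - fd (\<lambda>y. fd F y (cJ Y)) p X) / 4"
proof -
  define B where "B A D = fd (\<lambda>y. fd F y D) p A" for A D
  have dF: "\<And>y. y \<in> U \<Longrightarrow> F differentiable (at y)" using C U by (auto simp: Ck2_iff diff_open)
  have dFv: "\<And>y v. y \<in> U \<Longrightarrow> (\<lambda>y. fd F y v) differentiable (at y)"
    using C U by (auto simp: Ck2_iff diff_open)
  have l1: "linear (\<lambda>A. B A D)" for D
    unfolding B_def using has_derivative_linear[OF fd_works[OF dFv[OF U(2)]]] by simp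
  have l2: "linear (B A)" for A
    unfolding B_def
    by (rule linear_in_dir[OF U]) (use dF has_derivative_linear fd_works dFv U in blast)+
  have sym: "B A D = B D A" for A D unfolding B_def using schwarz_C2[OF U C] by simp
  have ex: "B A D = (\<Sum>j\<in>UNIV. \<Sum>k\<in>UNIV.
      Re (A$j) * Re (D$k) * B (axis j 1) (axis k 1) + Re (A$j) * Im (D$k) * B (axis j 1) (axis k \<i>)
    + Im (A$j) * Re (D$k) * B (axis j \<i>) (axis k 1) + Im (A$j) * Im (D$k) * B (axis j \<i>) (axis k \<i>))" for A D
    by (rule bilin_expand[OF l1 l2])
  have "kahler_form F p X Y = (\<Sum>j\<in>UNIV. \<Sum>k\<in>UNIV. Re (\<i> / 2 * ((complex_of_real (B (axis j 1) (axis k 1))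
      + \<i> * complex_of_real (B (axis j 1) (axis k \<i>))
      - \<i> * (complex_of_real (B (axis j \<i>) (axis k 1))
      + \<i> * complex_of_real (B (axis j \<i>) (axis k \<i>)))) / 4
        * (X$j * cnj (Y$k) - Y$j * cnj (X$k)))))"
    unfolding kahler_form_def dz_dzbar[OF U C] B_def
    by (simp add: sum_distrib_left Re_sum mult.assoc)
  also have "\<dots> = (B Y (cJ X) - B X (cJ Y) + B (cJ X) Y - B (cJ Y) X) / 8"
    unfolding ex[of Y "cJ X"] ex[of X "cJ Y"] ex[of "cJ X" Y] ex[of "cJ Y" X]
    apply (simp only: term_id cJ_nth)
    apply (simp add: sum_subtractf[symmetric] sum.distrib[symmetric] sum_divide_distrib)
    done
  also have "\<dots> = (B Y (cJ X) - B X (cJ Y)) / 4" using sym[of "cJ X" Y] sym[of "cJ Y" X] by simp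
  finally show ?thesis by (simp add: B_def)
qed


lemma lin_basis:
  fixes L :: "'a::euclidean_space \<Rightarrow> real"
  assumes "linear L"
  shows "L v = (\<Sum>b\<in>Basis. (v \<bullet> b) * L b)"
proof -
  have "L v = L (\<Sum>b\<in>Basis. (v \<bullet> b) *\<^sub>R b)" by (simp add: euclidean_representation)
  also have "\<dots> = (\<Sum>b\<in>Basis. (v \<bullet> b) * L b)"
    by (simp add: linear_sum[OF assms] linear_scale[OF assms])
  finally show ?thesis .
qed

lemma linear_cJ: "linear cJ"
  by (rule linearI) (auto simp: vec_eq_iff algebra_simps scaleR_conv_of_real)

lemma bounded_linear_cJ: "bounded_linear cJ"
  using linear_cJ linear_conv_bounded_linear by blast

lemma deriv_apply:
  fixes G V :: "'a::real_normed_vector \<Rightarrow> 'b::euclidean_space" and H :: "'b \<Rightarrow> real"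
  assumes M: "open M" "p \<in> M" and S: "open S" "\<And>z. z \<in> M \<Longrightarrow> G z \<in> S"
    and dH: "\<And>w. w \<in> S \<Longrightarrow> H differentiable (at w)"
    and dHv: "\<And>v. (\<lambda>w. fd H w v) differentiable (at (G p))"
    and dG: "(G has_derivative G') (at p)" and dV: "(V has_derivative V') (at p)"
  shows "((\<lambda>z. fd H (G z) (V z)) has_derivative
     (\<lambda>X. fd (\<lambda>w. fd H w (V p)) (G p) (G' X) + fd H (G p) (V' X))) (at p)"
proof -
  have linH: "\<And>w. w \<in> S \<Longrightarrow> linear (fd H w)"
    using dH fd_works has_derivative_linear by blast
  have Gp: "G p \<in> S" using S M by blast
  have h1: "((\<lambda>z. \<Sum>b\<in>Basis. (V z \<bullet> b) * fd H (G z) b) has_derivative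
      (\<lambda>X. \<Sum>b\<in>Basis. (V p \<bullet> b) * fd (\<lambda>w. fd H w b) (G p) (G' X) + (V' X \<bullet> b) * fd H (G p) b)) (at p)"
  proof (rule has_derivative_sum)
    fix b :: 'b assume "b \<in> Basis"
    have a: "((\<lambda>z. V z \<bullet> b) has_derivative (\<lambda>X. V' X \<bullet> b)) (at p)"
      using bounded_linear.has_derivative[OF bounded_linear_inner_left dV] .
    have c: "((\<lambda>z. fd H (G z) b) has_derivative (\<lambda>X. fd (\<lambda>w. fd H w b) (G p) (G' X))) (at p)"
      using has_derivative_compose[OF dG fd_works[OF dHv[of b]]] by simp
    show "((\<lambda>z. (V z \<bullet> b) * fd H (G z) b) has_derivative
      (\<lambda>X. (V p \<bullet> b) * fd (\<lambda>w. fd H w b) (G p) (G' X) + (V' X \<bullet> b) * fd H (G p) b)) (at p)"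
      using has_derivative_mult[OF a c] by (simp add: algebra_simps)
  qed
  have h2: "((\<lambda>z. fd H (G z) (V z)) has_derivative
      (\<lambda>X. \<Sum>b\<in>Basis. (V p \<bullet> b) * fd (\<lambda>w. fd H w b) (G p) (G' X) + (V' X \<bullet> b) * fd H (G p) b)) (at p)"
    by (rule has_derivative_transform_within_open[OF h1 M]) (simp add: lin_basis[OF linH] S)
  have lin2: "linear (\<lambda>v. fd (\<lambda>w. fd H w v) (G p) A)" for A
    by (rule linear_in_dir[OF S(1) Gp linH dHv])
  have "(\<lambda>X. \<Sum>b\<in>Basis. (V p \<bullet> b) * fd (\<lambda>w. fd H w b) (G p) (G' X) + (V' X \<bullet> b) * fd H (G p) b)
      = (\<lambda>X. fd (\<lambda>w. fd H w (V p)) (G p) (G' X) + fd H (G p) (V' X))"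
  proof
    fix X
    show "(\<Sum>b\<in>Basis. (V p \<bullet> b) * fd (\<lambda>w. fd H w b) (G p) (G' X) + (V' X \<bullet> b) * fd H (G p) b)
      = fd (\<lambda>w. fd H w (V p)) (G p) (G' X) + fd H (G p) (V' X)"
      using lin_basis[OF lin2[of "G' X"], of "V p"] lin_basis[OF linH[OF Gp], of "V' X"]
      by (simp add: sum.distrib)
  qed
  with h2 show ?thesis by simp
qed

lemma deriv_beta:
  fixes Psi :: "complex^'n \<Rightarrow> complex^'n" and Xi :: "complex^'n \<Rightarrow> real"
  assumes M: "open M" "p \<in> M" and S: "open S" and CP: "Ck_on 2 M Psi" and CX: "Ck_on 2 S Xi"
    and inS: "\<And>z. z \<in> M \<Longrightarrow> Psi z \<in> S"
  shows "((\<lambda>z. - fd Xi (Psi z) (cJ (fd Psi z Y))) has_derivative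
     (\<lambda>X. - (fd (\<lambda>w. fd Xi w (cJ (fd Psi p Y))) (Psi p) (fd Psi p X)
              + fd Xi (Psi p) (cJ (fd (\<lambda>z. fd Psi z Y) p X))))) (at p)"
proof -
  have dP: "\<And>z. z \<in> M \<Longrightarrow> Psi differentiable (at z)" using CP M by (auto simp: Ck2_iff diff_open)
  have dPv: "\<And>z v. z \<in> M \<Longrightarrow> (\<lambda>z. fd Psi z v) differentiable (at z)"
    using CP M by (auto simp: Ck2_iff diff_open)
  have dX: "\<And>w. w \<in> S \<Longrightarrow> Xi differentiable (at w)" using CX S by (auto simp: Ck2_iff diff_open)
  have dXv: "\<And>w v. w \<in> S \<Longrightarrow> (\<lambda>w. fd Xi w v) differentiable (at w)"
    using CX S by (auto simp: Ck2_iff diff_open)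
  have dV: "((\<lambda>z. cJ (fd Psi z Y)) has_derivative (\<lambda>X. cJ (fd (\<lambda>z. fd Psi z Y) p X))) (at p)"
    using bounded_linear.has_derivative[OF bounded_linear_cJ fd_works[OF dPv[OF M(2)]]] .
  show ?thesis
    using has_derivative_minus[OF deriv_apply[OF M S inS dX dXv[OF inS[OF M(2)]] fd_works[OF dP[OF M(2)]] dV]]
    by simp
qed

lemma pullback_formula:
  fixes Psi :: "complex^'n \<Rightarrow> complex^'n" and Xi :: "complex^'n \<Rightarrow> real"
  assumes M: "open M" "p \<in> M" and S: "open S" and CP: "Ck_on 2 M Psi" and CX: "Ck_on 2 S Xi"
    and inS: "\<And>z. z \<in> M \<Longrightarrow> Psi z \<in> S"
  shows "pullback Psi (kahler_form Xi) p X Y =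
     (fd (\<lambda>z. - fd Xi (Psi z) (cJ (fd Psi z Y))) p X - fd (\<lambda>z. - fd Xi (Psi z) (cJ (fd Psi z X))) p Y) / 4"
proof -
  have sy: "fd (\<lambda>z. fd Psi z Y) p X = fd (\<lambda>z. fd Psi z X) p Y"
    using schwarz_vec[OF M CP] by simp
  have e1: "fd (\<lambda>z. - fd Xi (Psi z) (cJ (fd Psi z V))) p W =
     - (fd (\<lambda>w. fd Xi w (cJ (fd Psi p V))) (Psi p) (fd Psi p W)
              + fd Xi (Psi p) (cJ (fd (\<lambda>z. fd Psi z V) p W)))" for V W
    using fd_eq[OF deriv_beta[OF M S CP CX inS, of V]] by simp
  show ?thesis
    unfolding pullback_def kahler_formula[OF S inS[OF M(2)] CX] e1 sy
    by (simp add: algebra_simps)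
qed

lemma omega_formula:
  fixes Phi :: "complex^'n \<Rightarrow> real"
  assumes M: "open M" "p \<in> M" and CF: "Ck_on 2 M Phi"
  shows "kahler_form Phi p X Y =
     (fd (\<lambda>z. - fd Phi z (cJ Y)) p X - fd (\<lambda>z. - fd Phi z (cJ X)) p Y) / 4"
proof -
  have dFv: "\<And>z v. z \<in> M \<Longrightarrow> (\<lambda>z. fd Phi z v) differentiable (at z)"
    using CF M by (auto simp: Ck2_iff diff_open)
  have e: "fd (\<lambda>z. - fd Phi z V) p = (\<lambda>h. - fd (\<lambda>z. fd Phi z V) p h)" for V
    by (rule fd_eq, rule has_derivative_minus, rule fd_works[OF dFv[OF M(2)]])
  show ?thesis unfolding kahler_formula[OF M CF] e by simp
qed


lemma sqmod_nth[simp]: "sqmod z $ k = (cmod (z$k))^2" by (simp add: sqmod_def)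

lemma vec_real_expand: "(w::real^'n) = (\<Sum>k\<in>UNIV. w$k *\<^sub>R axis k 1)"
proof (subst vec_eq_iff, intro allI)
  fix i
  have "\<And>x. w $ x *\<^sub>R (axis x (1::real) $ i) = (if x = i then w $ x else 0)"
    by (auto simp: axis_def)
  then show "w $ i = (\<Sum>k\<in>UNIV. w$k *\<^sub>R axis k 1) $ i" by simp
qed

lemma lin_real_vec:
  fixes L :: "real^'n \<Rightarrow> real"
  assumes "linear L"
  shows "L w = (\<Sum>k\<in>UNIV. w$k * L (axis k 1))"
proof -
  have "L w = L (\<Sum>k\<in>UNIV. w$k *\<^sub>R axis k 1)" using vec_real_expand[of w] by simp
  also have "\<dots> = (\<Sum>k\<in>UNIV. w$k * L (axis k 1))"
    by (simp add: linear_sum[OF assms] linear_scale[OF assms])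
  finally show ?thesis .
qed

lemma has_derivative_cmod2:
  "((\<lambda>z::complex^'n. (cmod (z$k))^2) has_derivative (\<lambda>X. 2 * Re (cnj (z$k) * X$k))) (at z)"
proof -
  have bR: "bounded_linear (\<lambda>z::complex^'n. Re (z$k))"
    by (rule bounded_linear_compose[OF bounded_linear_Re bounded_linear_vec_nth])
  have bI: "bounded_linear (\<lambda>z::complex^'n. Im (z$k))"
    by (rule bounded_linear_compose[OF bounded_linear_Im bounded_linear_vec_nth])
  have "((\<lambda>z::complex^'n. (Re (z$k))^2 + (Im (z$k))^2) has_derivative
      (\<lambda>X. 2 * Re (cnj (z$k) * X$k))) (at z)"
    by (rule has_derivative_eq_rhs[OF has_derivative_add[OF has_derivative_power[OF bounded_linear_imp_has_derivative[OF bR], of 2]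
        has_derivative_power[OF bounded_linear_imp_has_derivative[OF bI], of 2]]])
       (simp add: fun_eq_iff algebra_simps)
  then show ?thesis by (simp add: cmod_power2)
qed

definition dsq :: "complex^'n \<Rightarrow> complex^'n \<Rightarrow> real^'n" where
  "dsq z X = (\<chi> k. 2 * Re (cnj (z$k) * X$k))"

lemma has_derivative_sqmod: "(sqmod has_derivative dsq z) (at z)"
proof -
  have e: "sqmod = (\<lambda>z. \<Sum>k\<in>UNIV. (cmod (z$k))^2 *\<^sub>R axis k (1::real))"
    by (rule ext, subst vec_real_expand) simp
  have d1: "(sqmod has_derivative
        (\<lambda>X. \<Sum>k\<in>UNIV. (2 * Re (cnj (z$k) * X$k)) *\<^sub>R axis k (1::real))) (at z)"
    unfolding e by (intro has_derivative_sum has_derivative_scaleR_left has_derivative_cmod2)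
  have d2: "(\<lambda>X. \<Sum>k\<in>UNIV. (2 * Re (cnj (z$k) * X$k)) *\<^sub>R axis k (1::real)) = dsq z"
  proof
    fix X show "(\<Sum>k\<in>UNIV. (2 * Re (cnj (z$k) * X$k)) *\<^sub>R axis k (1::real)) = dsq z X"
      by (subst (2) vec_real_expand) (simp add: dsq_def)
  qed
  show ?thesis using d1 unfolding d2 .
qed

lemma sqmod_differentiable: "sqmod differentiable (at z)"
  using has_derivative_sqmod differentiable_def by blast

lemma Im_cnj_div: "(z::complex) \<noteq> 0 \<Longrightarrow> Im (cnj z * X) = (cmod z)^2 * Im (X / z)"
  by (simp add: complex_div_cnj[of X z] Im_divide_of_real mult.commute)

lemma lambda_formula:
  fixes F :: "complex^'n \<Rightarrow> real" and g :: "real^'n \<Rightarrow> real"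
  assumes U: "open U" "z \<in> U" and eqF: "\<And>z. z \<in> U \<Longrightarrow> F z = g (sqmod z)"
    and dg: "g differentiable (at (sqmod z))"
  shows "F differentiable (at z)" "fd F z V = fd g (sqmod z) (dsq z V)"
    "- fd F z (cJ X) = (\<Sum>k\<in>UNIV. 2 * pdx k g (sqmod z) * Im (cnj (z$k) * X$k))"
proof -
  have h: "((\<lambda>z. g (sqmod z)) has_derivative (\<lambda>V. fd g (sqmod z) (dsq z V))) (at z)"
    using has_derivative_compose[OF has_derivative_sqmod fd_works[OF dg]] by simp
  have h2: "(F has_derivative (\<lambda>V. fd g (sqmod z) (dsq z V))) (at z)"
    by (rule has_derivative_transform_within_open[OF h U]) (simp add: eqF)
  then show "F differentiable (at z)" using differentiable_def by blast
  show fdF: "fd F z V = fd g (sqmod z) (dsq z V)" for V using fd_eq[OF h2] by simp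
  have lin: "linear (fd g (sqmod z))" using fd_works[OF dg] has_derivative_linear by blast
  have "- fd F z (cJ X) = - (\<Sum>k\<in>UNIV. dsq z (cJ X) $ k * pdx k g (sqmod z))"
    unfolding fdF lin_real_vec[OF lin, of "dsq z (cJ X)"] pdx_def by simp
  also have "\<dots> = (\<Sum>k\<in>UNIV. 2 * pdx k g (sqmod z) * Im (cnj (z$k) * X$k))"
    by (simp add: dsq_def sum_negf[symmetric] algebra_simps)
  finally show "- fd F z (cJ X) = (\<Sum>k\<in>UNIV. 2 * pdx k g (sqmod z) * Im (cnj (z$k) * X$k))" .
qed

lemma has_derivative_theta:
  fixes p :: "complex^'n"
  assumes "p$k \<noteq> 0"
  shows "((\<lambda>z. Im (Y$k / z$k)) has_derivative (\<lambda>X. Im (- (Y$k * X$k) / (p$k * p$k)))) (at p)"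
proof -
  have g: "((\<lambda>z::complex^'n. z$k) has_derivative (\<lambda>X. X$k)) (at p)"
    by (rule bounded_linear_imp_has_derivative[OF bounded_linear_vec_nth])
  have "((\<lambda>z. Y$k / z$k) has_derivative (\<lambda>X. (0 * p$k - Y$k * X$k) / (p$k * p$k))) (at p)"
    by (rule has_derivative_divide'[OF has_derivative_const g assms])
  from bounded_linear.has_derivative[OF bounded_linear_Im this] show ?thesis by simp
qed

lemma dform:
  fixes gam :: "complex^'n \<Rightarrow> complex^'n \<Rightarrow> real" and H :: "'n \<Rightarrow> complex^'n \<Rightarrow> real"
  assumes W: "open W" "p \<in> W" and nz: "\<And>k. p$k \<noteq> 0"
    and eq: "\<And>z Y. z \<in> W \<Longrightarrow> gam z Y = (\<Sum>k\<in>UNIV. 2 * H k z * Im (Y$k / z$k))"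
    and dH: "\<And>k. H k differentiable (at p)"
  shows "fd (\<lambda>z. gam z Y) p X - fd (\<lambda>z. gam z X) p Y =
     2 * (\<Sum>k\<in>UNIV. fd (H k) p X * Im (Y$k / p$k) - fd (H k) p Y * Im (X$k / p$k))"
proof -
  have tk: "((\<lambda>z. 2 * H k z * Im (V$k / z$k)) has_derivative
      (\<lambda>h. 2 * H k p * Im (- (V$k * h$k) / (p$k * p$k)) + 2 * fd (H k) p h * Im (V$k / p$k))) (at p)" for k V
    using has_derivative_mult[OF has_derivative_mult_right[OF fd_works[OF dH[of k]], of 2]
        has_derivative_theta[OF nz[of k], of V]] by simp
  have der: "fd (\<lambda>z. gam z V) p = (\<lambda>h. \<Sum>k\<in>UNIV. 2 * H k p * Im (- (V$k * h$k) / (p$k * p$k))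
      + 2 * fd (H k) p h * Im (V$k / p$k))" for V
  proof (rule fd_eq)
    have "((\<lambda>z. \<Sum>k\<in>UNIV. 2 * H k z * Im (V$k / z$k)) has_derivative
      (\<lambda>h. \<Sum>k\<in>UNIV. 2 * H k p * Im (- (V$k * h$k) / (p$k * p$k))
      + 2 * fd (H k) p h * Im (V$k / p$k))) (at p)"
      by (rule has_derivative_sum) (rule tk)
    then show "((\<lambda>z. gam z V) has_derivative
      (\<lambda>h. \<Sum>k\<in>UNIV. 2 * H k p * Im (- (V$k * h$k) / (p$k * p$k))
      + 2 * fd (H k) p h * Im (V$k / p$k))) (at p)"
      by (rule has_derivative_transform_within_open[OF _ W]) (simp add: eq)
  qed
  have "fd (\<lambda>z. gam z Y) p X - fd (\<lambda>z. gam z X) p Y =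
    (\<Sum>k\<in>UNIV. (2 * H k p * Im (- (Y$k * X$k) / (p$k * p$k)) + 2 * fd (H k) p X * Im (Y$k / p$k))
      - (2 * H k p * Im (- (X$k * Y$k) / (p$k * p$k)) + 2 * fd (H k) p Y * Im (X$k / p$k)))"
    unfolding der by (simp only: sum_subtractf)
  also have "\<dots> = (\<Sum>k\<in>UNIV. 2 * (fd (H k) p X * Im (Y$k / p$k) - fd (H k) p Y * Im (X$k / p$k)))"
    by (rule sum.cong) (simp_all add: mult.commute right_diff_distrib)
  finally show ?thesis by (simp add: sum_distrib_left)
qed
definition rot :: "'n \<Rightarrow> real \<Rightarrow> complex^'n \<Rightarrow> complex^'n" where
  "rot k t z = z + axis k ((cis t - 1) * z$k)"

lemma rot_nth: "rot k t z $ j = (if j = k then cis t * z$k else z$j)"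
  by (simp add: rot_def axis_def algebra_simps)

lemma rot_0[simp]: "rot k 0 z = z" by (simp add: rot_def)

lemma sqmod_rot[simp]: "sqmod (rot k t z) = sqmod z"
  by (simp add: vec_eq_iff rot_nth norm_mult)

lemma special_rot: "special_map psi (rot k t z) = rot k t (special_map psi z)"
  by (simp add: vec_eq_iff rot_nth special_map_def)

lemma linear_axis: "linear (axis k :: complex \<Rightarrow> complex^'n)"
  by (rule linearI) (auto simp: vec_eq_iff axis_def)

lemma bounded_linear_axis: "bounded_linear (axis k :: complex \<Rightarrow> complex^'n)"
  using linear_axis linear_conv_bounded_linear by blast

lemma has_derivative_rot:
  "((\<lambda>t. rot k t z) has_derivative (\<lambda>s. s *\<^sub>R axis k (\<i> * z$k))) (at 0)"
proof -
  have c0: "((\<lambda>t. cis t) has_derivative (\<lambda>s. s *\<^sub>R (\<i> * cis 0))) (at 0)"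
    using has_derivative_cis[OF has_derivative_ident[of "at (0::real)"]] by simp
  have c: "((\<lambda>t. (cis t - 1) * z$k) has_derivative (\<lambda>s. (s *\<^sub>R (\<i> * cis 0)) * z$k)) (at 0)"
    using has_derivative_mult_left[OF has_derivative_diff[OF c0 has_derivative_const[of 1]], of "z$k"] by simp
  have "((\<lambda>t. z + axis k ((cis t - 1) * z$k)) has_derivative (\<lambda>s. 0 + axis k ((s *\<^sub>R (\<i> * cis 0)) * z$k))) (at 0)"
    by (intro has_derivative_add has_derivative_const bounded_linear.has_derivative[OF bounded_linear_axis c])
  moreover have "(\<lambda>s. 0 + axis k ((s *\<^sub>R (\<i> * cis 0)) * z$k)) = (\<lambda>s. s *\<^sub>R axis k (\<i> * z$k))"
    by (auto simp: fun_eq_iff vec_eq_iff axis_def)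
  ultimately show ?thesis by (simp add: rot_def)
qed

lemma rot_zero:
  assumes "H differentiable (at p)" "\<And>t. H (rot k t p) = H p"
  shows "fd H p (axis k (\<i> * p$k)) = 0"
proof -
  have "((\<lambda>t. H (rot k t p)) has_derivative (\<lambda>s. fd H p (s *\<^sub>R axis k (\<i> * p$k)))) (at 0)"
    using has_derivative_compose[OF has_derivative_rot fd_works] assms(1) by simp
  moreover have "((\<lambda>t. H (rot k t p)) has_derivative (\<lambda>s. 0)) (at 0)"
    using assms(2) by simp
  ultimately have "(\<lambda>s. fd H p (s *\<^sub>R axis k (\<i> * p$k))) = (\<lambda>s. 0)"
    using has_derivative_unique by blast
  then show ?thesis by (metis scaleR_one)
qed

lemma dPsi_rot:
  assumes "special_map psi differentiable (at p)"
  shows "fd (special_map psi) p (axis k (\<i> * p$k)) = axis k (\<i> * special_map psi p $ k)"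
proof -
  have a: "special_map psi differentiable (at (rot k 0 p))" using assms by simp
  have d1: "((\<lambda>t. special_map psi (rot k t p)) has_derivative (\<lambda>s. fd (special_map psi) (rot k 0 p) (s *\<^sub>R axis k (\<i> * p$k)))) (at 0)"
    using has_derivative_compose[OF has_derivative_rot fd_works[OF a]] .
  have d2: "((\<lambda>t. special_map psi (rot k t p)) has_derivative (\<lambda>s. s *\<^sub>R axis k (\<i> * special_map psi p $ k))) (at 0)"
    unfolding special_rot by (rule has_derivative_rot)
  have "(\<lambda>s. fd (special_map psi) (rot k 0 p) (s *\<^sub>R axis k (\<i> * p$k))) = (\<lambda>s. s *\<^sub>R axis k (\<i> * special_map psi p $ k))"
    by (rule has_derivative_unique[OF d1 d2])
  then have "fd (special_map psi) p (1 *\<^sub>R axis k (\<i> * p$k)) = 1 *\<^sub>R axis k (\<i> * special_map psi p $ k)"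
    unfolding rot_0 by meson
  then show ?thesis by simp
qed


lemma dense_nz:
  fixes z :: "complex^'n"
  assumes U: "open U" "z \<in> U" and e: "e > 0"
  shows "\<exists>z'\<in>U. (\<forall>j. z'$j \<noteq> 0) \<and> dist z' z < e"
proof -
  obtain r where r: "r > 0" "ball z r \<subseteq> U" using U open_contains_ball by blast
  define one :: "complex^'n" where "one = (\<chi> j. 1)"
  have n1: "norm one > 0" by (simp add: one_def vec_eq_iff)
  define d where "d = min r e / norm one"
  have d: "d > 0" using r e n1 by (simp add: d_def)
  have inf: "infinite {0<..<d}" using d by simp
  have fin: "finite ((\<lambda>j. - Re (z$j)) ` UNIV)" by simp
  obtain t where t: "t \<in> {0<..<d}" "t \<notin> (\<lambda>j. - Re (z$j)) ` UNIV"
  proof -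
    have "infinite ({0<..<d} - (\<lambda>j. - Re (z$j)) ` UNIV)" using Diff_infinite_finite[OF fin inf] .
    then obtain t where "t \<in> {0<..<d} - (\<lambda>j. - Re (z$j)) ` UNIV" using infinite_imp_nonempty by blast
    then show ?thesis using that by blast
  qed
  define z' where "z' = z + t *\<^sub>R one"
  have nz: "z'$j \<noteq> 0" for j
  proof
    assume "z'$j = 0"
    then have "z$j + of_real t = 0" by (simp add: z'_def one_def of_real_def)
    then have "Re (z$j) + t = 0" by (metis Re_complex_of_real plus_complex.sel(1) zero_complex.sel(1))
    then have "t = - Re (z$j)" by simp
    with t(2) show False by auto
  qed
  have "dist z' z = t * norm one" using t by (simp add: z'_def dist_norm)
  also have "\<dots> < d * norm one" using t n1 by simp
  also have "\<dots> = min r e" using n1 by (simp add: d_def)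
  finally have dz: "dist z' z < min r e" .
  then have "z' \<in> U" using r by (auto simp: dist_commute)
  with nz dz show ?thesis by auto
qed

lemma dense_eq:
  fixes f g :: "'a::metric_space \<Rightarrow> real"
  assumes U: "open U" and cf: "continuous_on U f" and cg: "continuous_on U g"
    and dense: "\<And>z e. z \<in> U \<Longrightarrow> e > 0 \<Longrightarrow> \<exists>z'. P z' \<and> z' \<in> U \<and> dist z' z < e"
    and eq: "\<And>z. z \<in> U \<Longrightarrow> P z \<Longrightarrow> f z = g z"
    and z: "z \<in> U"
  shows "f z = g z"
proof (rule ccontr)
  assume ne: "f z \<noteq> g z"
  have c: "isCont (\<lambda>x. f x - g x) z" using cf cg U z
    by (simp add: continuous_on_eq_continuous_at continuous_diff)
  define e where "e = \<bar>f z - g z\<bar>"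
  have e: "e > 0" using ne by (simp add: e_def)
  obtain d where d: "d > 0" "\<And>y. dist y z < d \<Longrightarrow> dist (f y - g y) (f z - g z) < e"
    using c e unfolding continuous_at_eps_delta by blast
  obtain z' where z': "P z'" "z' \<in> U" "dist z' z < d" using dense[OF z d(1)] by blast
  have "dist (f z' - g z') (f z - g z) < e" using d(2) z'(3) .
  with eq[OF z'(2,1)] show False by (simp add: e_def dist_real_def)
qed

lemma finite_subsingleton: "(\<And>x y. x \<in> A \<Longrightarrow> y \<in> A \<Longrightarrow> x = y) \<Longrightarrow> finite A"
  by (metis finite.simps is_singletonI' is_singleton_the_elem)

lemma seg_const:
  fixes f :: "complex^'n \<Rightarrow> real"
  assumes B: "convex B" and cf: "continuous_on B f"
    and der: "\<And>q. q \<in> B \<Longrightarrow> (\<forall>j. q$j \<noteq> 0) \<Longrightarrow> (f has_derivative (\<lambda>_. 0)) (at q)"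
    and q: "q1 \<in> B" "q2 \<in> B" "\<forall>j. q1$j \<noteq> 0"
  shows "f q2 = f q1"
proof -
  define \<gamma> where "\<gamma> t = q1 + t *\<^sub>R (q2 - q1)" for t :: real
  define K where "K = (\<Union>j. {t. \<gamma> t $ j = 0})"
  have fK: "finite K"
    unfolding K_def
  proof (rule finite_UN_I)
    show "finite (UNIV :: 'n set)" by simp
  next
    fix j
    show "finite {t. \<gamma> t $ j = 0}"
    proof (rule finite_subsingleton)
      fix t1 t2 assume "t1 \<in> {t. \<gamma> t $ j = 0}" "t2 \<in> {t. \<gamma> t $ j = 0}"
      then have a: "q1$j + t1 *\<^sub>R (q2$j - q1$j) = 0" "q1$j + t2 *\<^sub>R (q2$j - q1$j) = 0"
        by (auto simp: \<gamma>_def)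
      have "(t1 - t2) *\<^sub>R (q2$j - q1$j) = (q1$j + t1 *\<^sub>R (q2$j - q1$j)) - (q1$j + t2 *\<^sub>R (q2$j - q1$j))"
        by (simp add: algebra_simps)
      then have "(t1 - t2) *\<^sub>R (q2$j - q1$j) = 0" using a by simp
      moreover have "q2$j - q1$j \<noteq> 0" using a q(3) by auto
      ultimately show "t1 = t2" by simp
    qed
  qed
  have gB: "\<gamma> t \<in> B" if "t \<in> {0..1}" for t
  proof -
    have "\<gamma> t = (1 - t) *\<^sub>R q1 + t *\<^sub>R q2" by (simp add: \<gamma>_def algebra_simps)
    then show ?thesis using B q that by (simp add: convex_alt)
  qed
  have cg: "continuous_on {0..1} \<gamma>" unfolding \<gamma>_def by (intro continuous_intros)
  have cfg: "continuous_on {0..1} (\<lambda>t. f (\<gamma> t))"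
    by (rule continuous_on_compose2[OF cf cg]) (use gB in auto)
  have "(\<lambda>t. f (\<gamma> t)) 1 = f q1"
  proof (rule has_derivative_zero_unique_strong_interval[OF fK cfg])
    show "f (\<gamma> 0) = f q1" by (simp add: \<gamma>_def)
    fix x assume x: "x \<in> {0..1} - K"
    have nz: "\<forall>j. \<gamma> x $ j \<noteq> 0" using x by (auto simp: K_def)
    have dg: "(\<gamma> has_derivative (\<lambda>h. h *\<^sub>R (q2 - q1))) (at x)"
      unfolding \<gamma>_def by (auto intro!: derivative_eq_intros)
    have "((\<lambda>t. f (\<gamma> t)) has_derivative (\<lambda>h. 0)) (at x)"
      using has_derivative_compose[OF dg der[OF gB nz]] x by simp
    then show "((\<lambda>t. f (\<gamma> t)) has_derivative (\<lambda>h. 0)) (at x within {0..1})"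
      by (rule has_derivative_at_withinI)
  qed simp_all
  then show ?thesis by (simp add: \<gamma>_def)
qed

lemma const_on_conn:
  fixes f :: "complex^'n \<Rightarrow> real"
  assumes M: "open M" "connected M" and cf: "continuous_on M f"
    and der: "\<And>q. q \<in> M \<Longrightarrow> (\<forall>j. q$j \<noteq> 0) \<Longrightarrow> (f has_derivative (\<lambda>_. 0)) (at q)"
  shows "f constant_on M"
proof (rule locally_constant_imp_constant[OF M(2)])
  fix a assume a: "a \<in> M"
  obtain r where r: "r > 0" "ball a r \<subseteq> M" using M(1) a open_contains_ball by blast
  obtain q1 where q1: "q1 \<in> ball a r" "\<forall>j. q1$j \<noteq> 0"
    using dense_nz[OF open_ball centre_in_ball[THEN iffD2, OF r(1)] r(1)] by blast
  have cB: "continuous_on (ball a r) f" using cf r continuous_on_subset by blast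
  have all: "f x = f q1" if "x \<in> ball a r" for x
  proof (rule dense_eq[OF open_ball cB continuous_on_const, where P="\<lambda>z. \<forall>j. z$j \<noteq> 0"])
    show "x \<in> ball a r" by fact
    fix z e assume "z \<in> ball a r" "(e::real) > 0"
    then show "\<exists>z'. (\<forall>j. z'$j \<noteq> 0) \<and> z' \<in> ball a r \<and> dist z' z < e"
      using dense_nz[OF open_ball] by blast
  next
    fix z assume "z \<in> ball a r" "\<forall>j. z$j \<noteq> 0"
    then show "f z = f q1"
      by (intro seg_const[OF convex_ball cB _ q1(1) _ q1(2)]) (use der r in auto)
  qed
  show "\<exists>T. openin (top_of_set M) T \<and> a \<in> T \<and> (\<forall>x\<in>T. f x = f a)"
    using all r a by (intro exI[of _ "ball a r"]) (auto simp: open_subset)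
qed

lemma cont_nth:
  fixes A :: "'a::topological_space \<Rightarrow> 'b::real_normed_vector^'n"
  shows "continuous_on M A \<Longrightarrow> continuous_on M (\<lambda>p. A p $ j)"
  using continuous_on_compose2[OF linear_continuous_on[OF bounded_linear_vec_nth[of j]], of M A] by blast

lemma kahler_cont:
  fixes F :: "complex^'n \<Rightarrow> real" and G A B :: "'a::topological_space \<Rightarrow> complex^'n"
  assumes U: "open U" "Ck_on 2 U F" and G: "continuous_on M G" "G ` M \<subseteq> U"
    and cA: "continuous_on M A" and cB: "continuous_on M B"
  shows "continuous_on M (\<lambda>p. kahler_form F (G p) (A p) (B p))"
proof -
  define W where "W j k w = (complex_of_real (fd (\<lambda>y. fd F y (axis k 1)) w (axis j 1))
      + \<i> * complex_of_real (fd (\<lambda>y. fd F y (axis k \<i>)) w (axis j 1))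
      - \<i> * (complex_of_real (fd (\<lambda>y. fd F y (axis k 1)) w (axis j \<i>))
      + \<i> * complex_of_real (fd (\<lambda>y. fd F y (axis k \<i>)) w (axis j \<i>)))) / 4" for j k w
  have c2: "continuous_on U (\<lambda>y. fd (\<lambda>y. fd F y v) y u)" for u v using U by (simp add: Ck2_iff)
  have cW: "continuous_on U (W j k)" for j k unfolding W_def by (intro continuous_intros c2) simp
  have cWG: "continuous_on M (\<lambda>p. W j k (G p))" for j k
    by (rule continuous_on_compose2[OF cW[of j k] G(1) G(2)])
  have eq: "kahler_form F (G p) (A p) (B p) = Re ((\<i> / 2) * (\<Sum>j\<in>UNIV. \<Sum>k\<in>UNIV.
      W j k (G p) * (A p $ j * cnj (B p $ k) - B p $ j * cnj (A p $ k))))" if "p \<in> M" for p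
    using that G(2) unfolding kahler_form_def W_def by (simp add: dz_dzbar[OF U(1) _ U(2)] image_subset_iff)
  show ?thesis
    by (subst continuous_on_cong[OF refl eq])
       (assumption, intro continuous_intros cWG cont_nth cA cB)
qed


lemma tilde_nbhd:
  fixes w :: "complex^'n"
  assumes U: "open U" "w \<in> U" and nz: "\<forall>j. w$j \<noteq> 0"
  shows "\<exists>e>0. ball (sqmod w) e \<subseteq> tilde U"
proof -
  define sec where "sec y = (\<chi> j. complex_of_real (sqrt (y$j) / cmod (w$j)) * w$j)" for y :: "real^'n"
  have sw: "sec (sqmod w) = w" using nz by (simp add: sec_def vec_eq_iff)
  have cs: "continuous_on UNIV sec" unfolding sec_def
    by (intro continuous_intros continuous_on_vec_lambda) (use nz in auto)
  obtain r where r: "r > 0" "ball w r \<subseteq> U" using U open_contains_ball by blast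
  have "isCont sec (sqmod w)" using cs by (simp add: continuous_on_eq_continuous_at)
  then obtain d where d: "d > 0" "\<And>y. dist y (sqmod w) < d \<Longrightarrow> dist (sec y) w < r"
    using r(1) unfolding continuous_at_eps_delta sw by blast
  define m where "m = Min (range (\<lambda>j. (cmod (w$j))^2))"
  have m: "m > 0" unfolding m_def using nz by (subst Min_gr_iff) auto
  have mle: "m \<le> (cmod (w$j))^2" for j unfolding m_def by (rule Min_le) auto
  have "ball (sqmod w) (min d m) \<subseteq> tilde U"
  proof
    fix y assume y: "y \<in> ball (sqmod w) (min d m)"
    have pos: "y$j > 0" for j
    proof -
      have "\<bar>(sqmod w - y) $ j\<bar> \<le> norm (sqmod w - y)" by (metis component_le_norm_cart real_norm_def)
      also have "\<dots> < m" using y by (simp add: dist_norm)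
      finally have "\<bar>(cmod (w$j))^2 - y$j\<bar> < m" by simp
      then show ?thesis using mle[of j] by linarith
    qed
    have "sec y \<in> U" using d(2)[of y] y r(2) by (auto simp: dist_commute)
    moreover have "sqmod (sec y) = y"
    proof (subst vec_eq_iff, intro allI)
      fix j
      have "cmod (complex_of_real (sqrt (y$j) / cmod (w$j)) * w$j) = sqrt (y$j)"
        using nz pos[of j] by (simp add: norm_mult norm_divide del: of_real_divide)
      then show "sqmod (sec y) $ j = y $ j" using pos[of j] by (simp add: sec_def)
    qed
    ultimately show "y \<in> tilde U" unfolding tilde_def by (metis image_eqI)
  qed
  then show ?thesis using d m by (intro exI[of _ "min d m"]) auto
qed

lemma pdx_int:
  assumes U: "open U" "w \<in> U" and nz: "\<forall>j. w$j \<noteq> 0"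
    and dg: "g differentiable (at (sqmod w))" and eq: "\<forall>x\<in>tilde U. g x = G x"
  shows "pdx k G (sqmod w) = pdx k g (sqmod w)"
proof -
  obtain e where e: "e > 0" "ball (sqmod w) e \<subseteq> tilde U" using tilde_nbhd[OF U nz] by blast
  have "fd G (sqmod w) = fd g (sqmod w)"
    by (rule fd_local[of "ball (sqmod w) e" "sqmod w" g G]) (use e eq dg in auto)
  then show ?thesis by (simp add: pdx_def)
qed

locale LL =
  fixes M S :: "(complex^'n) set" and Phi Xi :: "complex^'n \<Rightarrow> real"
    and Phit Xit gP gX :: "real^'n \<Rightarrow> real" and UP UX :: "(real^'n) set"
    and psi :: "'n \<Rightarrow> real^'n \<Rightarrow> real"
  assumes M: "open M" "connected M"
    and S: "open S"
    and CPhi: "smooth_on M Phi" and CXi: "smooth_on S Xi"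
    and UP: "open UP" "tilde M \<subseteq> UP" "smooth_on UP gP" "\<forall>x\<in>tilde M. gP x = Phit x"
    and UX: "open UX" "tilde S \<subseteq> UX" "smooth_on UX gX" "\<forall>x\<in>tilde S. gX x = Xit x"
    and eqP: "\<forall>z\<in>M. Phi z = Phit (sqmod z)" and eqX: "\<forall>z\<in>S. Xi z = Xit (sqmod z)"
    and CPsi: "smooth_on M (special_map psi)" and PsiS: "special_map psi ` M \<subseteq> S"
    and kah: "\<forall>p\<in>M. \<forall>X. X \<noteq> 0 \<longrightarrow> kahler_form Phi p X (\<chi> j. \<i> * X $ j) > 0"
begin

abbreviation "Psi \<equiv> special_map psi"
definition "Om = {z\<in>M. \<forall>j. z$j \<noteq> 0}"
definition "beta z Y = - fd Xi (Psi z) (cJ (fd Psi z Y))"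
definition "lam z Y = - fd Phi z (cJ Y)"
definition "HX k z = sqmod (Psi z) $ k * pdx k gX (sqmod (Psi z))"
definition "HP k z = sqmod z $ k * pdx k gP (sqmod z)"
definition "h k z = HX k z - HP k z"

lemma sqM: "z \<in> M \<Longrightarrow> sqmod z \<in> UP" using UP(2) by (auto simp: tilde_def)
lemma sqS: "w \<in> S \<Longrightarrow> sqmod w \<in> UX" using UX(2) by (auto simp: tilde_def)
lemma PsiM: "z \<in> M \<Longrightarrow> Psi z \<in> S" using PsiS by auto
lemma Phi_g: "z \<in> M \<Longrightarrow> Phi z = gP (sqmod z)" using eqP UP(4) by (auto simp: tilde_def)
lemma Xi_g: "w \<in> S \<Longrightarrow> Xi w = gX (sqmod w)" using eqX UX(4) by (auto simp: tilde_def)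
lemma CP2: "Ck_on 2 M Phi" using CPhi smooth_Ck by blast
lemma CX2: "Ck_on 2 S Xi" using CXi smooth_Ck by blast
lemma CPsi2: "Ck_on 2 M Psi" using CPsi smooth_Ck by blast
lemma dgP: "y \<in> UP \<Longrightarrow> gP differentiable (at y)"
  using UP smooth_Ck[OF UP(3), of 2] by (auto simp: Ck2_iff diff_open)
lemma dgPv: "y \<in> UP \<Longrightarrow> (\<lambda>y. fd gP y v) differentiable (at y)"
  using UP smooth_Ck[OF UP(3), of 2] by (auto simp: Ck2_iff diff_open)
lemma dgX: "y \<in> UX \<Longrightarrow> gX differentiable (at y)"
  using UX smooth_Ck[OF UX(3), of 2] by (auto simp: Ck2_iff diff_open)
lemma dgXv: "y \<in> UX \<Longrightarrow> (\<lambda>y. fd gX y v) differentiable (at y)"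
  using UX smooth_Ck[OF UX(3), of 2] by (auto simp: Ck2_iff diff_open)
lemma dPsi: "z \<in> M \<Longrightarrow> Psi differentiable (at z)"
  using CPsi2 M by (auto simp: Ck2_iff diff_open)
lemma dPhiv: "z \<in> M \<Longrightarrow> (\<lambda>z. fd Phi z v) differentiable (at z)"
  using CP2 M by (auto simp: Ck2_iff diff_open)

lemma diff_sqk: "(\<lambda>z::complex^'n. sqmod z $ k) differentiable (at z)"
  using has_derivative_cmod2 by (auto simp: differentiable_def)

lemma HP_diff: "z \<in> M \<Longrightarrow> HP k differentiable (at z)"
  unfolding HP_def[abs_def] pdx_def
  by (intro differentiable_mult diff_sqk differentiable_compose[OF dgPv] sqM sqmod_differentiable)

lemma HX_diff: "z \<in> M \<Longrightarrow> HX k differentiable (at z)"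
  unfolding HX_def[abs_def] pdx_def
  by (intro differentiable_mult differentiable_compose[OF diff_sqk] differentiable_compose[OF dgXv]
      differentiable_compose[OF sqmod_differentiable] dPsi sqS PsiM)

lemma h_diff: "z \<in> M \<Longrightarrow> h k differentiable (at z)"
  unfolding h_def[abs_def] by (intro differentiable_diff HX_diff HP_diff)

lemma Om_open: "open Om"
proof -
  have "Om = M \<inter> (\<Inter>j. {z. z$j \<noteq> 0})" by (auto simp: Om_def)
  moreover have "open (\<Inter>j. {z::complex^'n. z$j \<noteq> 0})"
    by (rule open_INT) (auto intro!: open_Collect_neq continuous_intros)
  ultimately show ?thesis using M(1) by auto
qed

lemma Om_M: "z \<in> Om \<Longrightarrow> z \<in> M" by (simp add: Om_def)
lemma Om_nz: "z \<in> Om \<Longrightarrow> z$j \<noteq> 0" by (simp add: Om_def)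

lemma lam_Om:
  assumes z: "z \<in> Om"
  shows "lam z Y = (\<Sum>k\<in>UNIV. 2 * HP k z * Im (Y$k / z$k))"
proof -
  have "lam z Y = (\<Sum>k\<in>UNIV. 2 * pdx k gP (sqmod z) * Im (cnj (z$k) * Y$k))"
    unfolding lam_def
    by (rule lambda_formula(3)[OF M(1) Om_M[OF z] Phi_g dgP[OF sqM[OF Om_M[OF z]]]])
  also have "\<dots> = (\<Sum>k\<in>UNIV. 2 * HP k z * Im (Y$k / z$k))"
  proof (rule sum.cong)
    fix x
    show "2 * pdx x gP (sqmod z) * Im (cnj (z$x) * Y$x) = 2 * HP x z * Im (Y$x / z$x)"
      unfolding Im_cnj_div[OF Om_nz[OF z]] HP_def by simp
  qed simp
  finally show ?thesis .
qed

lemma HX_rot: "HX k (rot j t z) = HX k z" by (simp add: HX_def special_rot del: sqmod_nth)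
lemma HP_rot: "HP k (rot j t z) = HP k z" by (simp add: HP_def del: sqmod_nth)
lemma h_rot: "h k (rot j t z) = h k z" by (simp add: h_def HX_rot HP_rot)

lemma Im_Psi:
  assumes z: "z \<in> Om"
  shows "Im (cnj (Psi z $ k) * (fd Psi z Y $ k)) = (cmod (Psi z $ k))^2 * Im (Y$k / z$k)"
proof -
  have zk: "z$k \<noteq> 0" using Om_nz[OF z] .
  define r where "r w = Re (Psi w $ k / w $ k)" for w
  have Pk: "Psi w $ k = of_real (r w) * w$k" if "w$k \<noteq> 0" for w
    using that by (simp add: r_def special_map_def)
  have dP: "((\<lambda>w. Psi w $ k) has_derivative (\<lambda>Y. fd Psi z Y $ k)) (at z)"
    using bounded_linear.has_derivative[OF bounded_linear_vec_nth fd_works[OF dPsi[OF Om_M[OF z]]]] .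
  have dk: "((\<lambda>w::complex^'n. w$k) has_derivative (\<lambda>Y. Y$k)) (at z)"
    by (rule bounded_linear_imp_has_derivative[OF bounded_linear_vec_nth])
  obtain r' where dr: "(r has_derivative r') (at z)"
    using bounded_linear.has_derivative[OF bounded_linear_Re has_derivative_divide'[OF dP dk zk]]
    unfolding r_def by blast
  have d2: "((\<lambda>w. of_real (r w) * w$k) has_derivative (\<lambda>Y. of_real (r' Y) * z$k + of_real (r z) * Y$k)) (at z)"
    using has_derivative_mult[OF bounded_linear.has_derivative[OF bounded_linear_of_real dr] dk]
    by (simp add: algebra_simps)
  have op: "open {w::complex^'n. w$k \<noteq> 0}" by (auto intro!: open_Collect_neq continuous_intros)
  have d3: "((\<lambda>w. Psi w $ k) has_derivative (\<lambda>Y. of_real (r' Y) * z$k + of_real (r z) * Y$k)) (at z)"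
    by (rule has_derivative_transform_within_open[OF d2 op]) (auto simp: Pk zk)
  have eq: "fd Psi z Y $ k = of_real (r' Y) * z$k + of_real (r z) * Y$k"
    using has_derivative_unique[OF dP d3] by metis
  have "Im (cnj (of_real (r z) * z$k) * (of_real (r' Y) * z$k + of_real (r z) * Y$k))
      = (r z)^2 * Im (cnj (z$k) * Y$k)"
    by (simp add: algebra_simps power2_eq_square)
  also have "\<dots> = (cmod (of_real (r z) * z$k))^2 * Im (Y$k / z$k)"
    unfolding Im_cnj_div[OF zk] by (simp add: norm_mult power_mult_distrib)
  finally show ?thesis unfolding eq Pk[OF zk] .
qed

lemma beta_Om:
  assumes z: "z \<in> Om"
  shows "beta z Y = (\<Sum>k\<in>UNIV. 2 * HX k z * Im (Y$k / z$k))"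
proof -
  have zM: "z \<in> M" using Om_M[OF z] .
  have "beta z Y = (\<Sum>k\<in>UNIV. 2 * pdx k gX (sqmod (Psi z)) * Im (cnj (Psi z $ k) * (fd Psi z Y) $ k))"
    unfolding beta_def
    by (rule lambda_formula(3)[OF S PsiM[OF zM] Xi_g dgX[OF sqS[OF PsiM[OF zM]]]])
  also have "\<dots> = (\<Sum>k\<in>UNIV. 2 * HX k z * Im (Y$k / z$k))"
  proof (rule sum.cong)
    fix x
    show "2 * pdx x gX (sqmod (Psi z)) * Im (cnj (Psi z $ x) * fd Psi z Y $ x) = 2 * HX x z * Im (Y$x / z$x)"
      unfolding Im_Psi[OF z] HX_def by simp
  qed simp
  finally show ?thesis .
qed

lemma deriv_lam: "p \<in> M \<Longrightarrow> ((\<lambda>z. lam z Y) has_derivative (\<lambda>X. - fd (\<lambda>z. fd Phi z (cJ Y)) p X)) (at p)"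
  unfolding lam_def by (rule has_derivative_minus[OF fd_works[OF dPhiv]])

lemma diff_beta: "p \<in> M \<Longrightarrow> (\<lambda>z. beta z Y) differentiable (at p)"
  unfolding beta_def differentiable_def using deriv_beta[OF M(1) _ S CPsi2 CX2 PsiM] by blast

lemma diff_lam: "p \<in> M \<Longrightarrow> (\<lambda>z. lam z Y) differentiable (at p)"
  using deriv_lam differentiable_def by blast

lemma pb_eq: "p \<in> M \<Longrightarrow> pullback Psi (kahler_form Xi) p X Y = (fd (\<lambda>z. beta z Y) p X - fd (\<lambda>z. beta z X) p Y) / 4"
  unfolding beta_def by (rule pullback_formula[OF M(1) _ S CPsi2 CX2 PsiM])

lemma om_eq: "p \<in> M \<Longrightarrow> kahler_form Phi p X Y = (fd (\<lambda>z. lam z Y) p X - fd (\<lambda>z. lam z X) p Y) / 4"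
  unfolding lam_def by (rule omega_formula[OF M(1) _ CP2])

lemma main_id:
  assumes p: "p \<in> Om"
  shows "4 * (pullback Psi (kahler_form Xi) p X Y - kahler_form Phi p X Y) =
    2 * (\<Sum>k\<in>UNIV. fd (h k) p X * Im (Y$k / p$k) - fd (h k) p Y * Im (X$k / p$k))"
proof -
  define gam where "gam z V = beta z V - lam z V" for z V
  have pM: "p \<in> M" using Om_M[OF p] .
  have fdg: "fd (\<lambda>z. gam z V) p W = fd (\<lambda>z. beta z V) p W - fd (\<lambda>z. lam z V) p W" for V W
    unfolding gam_def using fd_eq[OF has_derivative_diff[OF fd_works[OF diff_beta[OF pM]] fd_works[OF diff_lam[OF pM]]]]
    by simp
  have geq: "gam z V = (\<Sum>k\<in>UNIV. 2 * h k z * Im (V$k / z$k))" if "z \<in> Om" for z V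
    unfolding gam_def beta_Om[OF that] lam_Om[OF that] h_def
    by (simp add: sum_subtractf[symmetric] algebra_simps)
  have "4 * (pullback Psi (kahler_form Xi) p X Y - kahler_form Phi p X Y) =
      fd (\<lambda>z. gam z Y) p X - fd (\<lambda>z. gam z X) p Y"
    unfolding pb_eq[OF pM] om_eq[OF pM] fdg by (simp add: field_simps)
  also have "\<dots> = 2 * (\<Sum>k\<in>UNIV. fd (h k) p X * Im (Y$k / p$k) - fd (h k) p Y * Im (X$k / p$k))"
    by (rule dform[OF Om_open p Om_nz[OF p] geq h_diff[OF pM]])
  finally show ?thesis .
qed

lemma om_id:
  assumes p: "p \<in> Om"
  shows "4 * kahler_form Phi p X Y =
    2 * (\<Sum>k\<in>UNIV. fd (HP k) p X * Im (Y$k / p$k) - fd (HP k) p Y * Im (X$k / p$k))"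
proof -
  have pM: "p \<in> M" using Om_M[OF p] .
  have "4 * kahler_form Phi p X Y = fd (\<lambda>z. lam z Y) p X - fd (\<lambda>z. lam z X) p Y"
    unfolding om_eq[OF pM] by simp
  also have "\<dots> = 2 * (\<Sum>k\<in>UNIV. fd (HP k) p X * Im (Y$k / p$k) - fd (HP k) p Y * Im (X$k / p$k))"
    by (rule dform[OF Om_open p Om_nz[OF p] lam_Om HP_diff[OF pM]])
  finally show ?thesis .
qed

lemma theta_Yk: "p$j \<noteq> 0 \<Longrightarrow> Im (axis k (\<i> * p$k) $ j / p$j) = (if j = k then 1 else 0)"
  by (auto simp: axis_def)

lemma sum_delta_mul:
  fixes f g :: "'n \<Rightarrow> real"
  shows "(\<Sum>j\<in>UNIV. f j * (if j = k then 1 else 0) - 0 * g j) = f k"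
proof -
  have "(\<Sum>j\<in>UNIV. f j * (if j = k then 1 else 0) - 0 * g j) = (\<Sum>j\<in>UNIV. if j = k then f j else 0)"
    by (rule sum.cong) auto
  then show ?thesis by simp
qed

lemma main_Yk:
  assumes p: "p \<in> Om"
  shows "4 * (pullback Psi (kahler_form Xi) p X (axis k (\<i> * p$k)) - kahler_form Phi p X (axis k (\<i> * p$k)))
     = 2 * fd (h k) p X"
proof -
  have pM: "p \<in> M" using Om_M[OF p] .
  have z: "fd (h j) p (axis k (\<i> * p$k)) = 0" for j
    by (rule rot_zero[OF h_diff[OF pM]]) (simp add: h_rot)
  show ?thesis
    unfolding main_id[OF p] theta_Yk[OF Om_nz[OF p]] z sum_delta_mul by simp
qed

lemma om_Yk:
  assumes p: "p \<in> Om"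
  shows "4 * kahler_form Phi p X (axis k (\<i> * p$k)) = 2 * fd (HP k) p X"
proof -
  have pM: "p \<in> M" using Om_M[OF p] .
  have z: "fd (HP j) p (axis k (\<i> * p$k)) = 0" for j
    by (rule rot_zero[OF HP_diff[OF pM]]) (simp add: HP_rot)
  show ?thesis
    unfolding om_id[OF p] theta_Yk[OF Om_nz[OF p]] z sum_delta_mul by simp
qed

end


context LL begin

lemma kahler_zero: "kahler_form F w X 0 = 0"
  by (simp add: kahler_form_def)

lemma cJ_axis: "(\<chi> j. \<i> * axis k c $ j) = axis k (\<i> * c)"
  by (simp add: vec_eq_iff axis_def)

lemma h_cont: "continuous_on M (h k)"
  using h_diff by (intro continuous_at_imp_continuous_on) (auto intro: differentiable_imp_continuous_within)

lemma fwd_h0: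
  assumes L: "\<forall>p\<in>M. \<forall>X Y. pullback Psi (kahler_form Xi) p X Y = kahler_form Phi p X Y"
    and p: "p \<in> Om"
  shows "fd (h k) p X = 0"
  using main_Yk[OF p, of X k] L Om_M[OF p] by simp

lemma fwd_Psi_nz:
  assumes L: "\<forall>p\<in>M. \<forall>X Y. pullback Psi (kahler_form Xi) p X Y = kahler_form Phi p X Y"
    and p: "p \<in> Om"
  shows "Psi p $ k \<noteq> 0"
proof
  assume P0: "Psi p $ k = 0"
  have pM: "p \<in> M" using Om_M[OF p] .
  define A where "A = axis k (p$k)"
  have A0: "A \<noteq> 0" using Om_nz[OF p] by (simp add: A_def)
  have "kahler_form Phi p A (\<chi> j. \<i> * A $ j) > 0" using kah pM A0 by blast
  moreover have "(\<chi> j. \<i> * A $ j) = axis k (\<i> * p$k)" by (simp add: A_def cJ_axis)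
  moreover have "fd Psi p (axis k (\<i> * p$k)) = 0" using dPsi_rot[OF dPsi[OF pM]] P0 by simp
  ultimately have "pullback Psi (kahler_form Xi) p A (axis k (\<i> * p$k)) > 0" using L pM by simp
  then show False by (simp add: pullback_def \<open>fd Psi p (axis k (\<i> * p$k)) = 0\<close> kahler_zero)
qed

lemma fwd_const:
  assumes L: "\<forall>p\<in>M. \<forall>X Y. pullback Psi (kahler_form Xi) p X Y = kahler_form Phi p X Y"
  shows "\<exists>c. \<forall>z\<in>M. h k z = c"
proof -
  have "h k constant_on M"
  proof (rule const_on_conn[OF M h_cont])
    fix q assume q: "q \<in> M" "\<forall>j. q$j \<noteq> 0"
    then have qO: "q \<in> Om" by (simp add: Om_def)
    have "fd (h k) q = (\<lambda>_. 0)" using fwd_h0[OF L qO] by (simp add: fun_eq_iff)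
    then show "(h k has_derivative (\<lambda>_. 0)) (at q)" using fd_works[OF h_diff[of q k, OF q(1)]] by simp
  qed
  then show ?thesis by (auto simp: constant_on_def)
qed

lemma sqmod_Psi: "sqmod (Psi z) = (\<chi> j. (psi j (sqmod z))^2 * sqmod z $ j)"
  by (simp add: vec_eq_iff special_map_def norm_mult power_mult_distrib)

lemma Om_pos: "z \<in> Om \<Longrightarrow> sqmod z $ j > 0" by (simp add: Om_nz)

lemma Om_tilde: "z \<in> Om \<Longrightarrow> sqmod z \<in> tilde M" by (simp add: tilde_def Om_M)

lemma pdxP: "z \<in> Om \<Longrightarrow> pdx k Phit (sqmod z) = pdx k gP (sqmod z)"
  using pdx_int[OF M(1) Om_M _ dgP[OF sqM[OF Om_M]] UP(4)] Om_nz by blast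

lemma pdxX: "z \<in> Om \<Longrightarrow> \<forall>j. Psi z $ j \<noteq> 0 \<Longrightarrow>
   pdx k Xit (sqmod (Psi z)) = pdx k gX (sqmod (Psi z))"
  using pdx_int[OF S PsiM[OF Om_M] _ dgX[OF sqS[OF PsiM[OF Om_M]]] UX(4)] by blast

lemma forward:
  assumes L: "\<forall>p\<in>M. \<forall>X Y. pullback Psi (kahler_form Xi) p X Y = kahler_form Phi p X Y"
  shows "\<exists>c :: 'n \<Rightarrow> real. \<forall>x\<in>tilde M. (\<forall>j. x $ j > 0) \<longrightarrow> (\<forall>k.
           (psi k x)\<^sup>2 * pdx k Xit (\<chi> j. (psi j x)\<^sup>2 * x $ j) = pdx k Phit x + c k / x $ k)"
proof -
  obtain c where c: "\<And>k z. z \<in> M \<Longrightarrow> h k z = c k"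
    using fwd_const[OF L] by metis
  show ?thesis
  proof (intro exI[of _ c] ballI impI allI)
    fix x k assume x: "x \<in> tilde M" "\<forall>j. x $ j > 0"
    obtain z where z: "z \<in> M" "x = sqmod z" using x(1) by (auto simp: tilde_def)
    have zO: "z \<in> Om" using z x(2) by (auto simp: Om_def)
    have nzP: "\<forall>j. Psi z $ j \<noteq> 0" using fwd_Psi_nz[OF L zO] by blast
    have hk: "h k z = c k" using c z(1) .
    have xk: "x $ k > 0" using x(2) by blast
    have "sqmod (Psi z) $ k * pdx k gX (sqmod (Psi z)) - x $ k * pdx k gP x = c k"
      using hk z(2) by (simp add: h_def HX_def HP_def del: sqmod_nth)
    then have "(psi k x)\<^sup>2 * x $ k * pdx k Xit (\<chi> j. (psi j x)\<^sup>2 * x $ j) - x $ k * pdx k Phit x = c k"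
      using pdxX[OF zO nzP, of k] pdxP[OF zO, of k] sqmod_Psi[of z] z(2) by (simp del: sqmod_nth)
    then show "(psi k x)\<^sup>2 * pdx k Xit (\<chi> j. (psi j x)\<^sup>2 * x $ j) = pdx k Phit x + c k / x $ k"
      using xk by (simp add: field_simps)
  qed
qed

lemma Psi_cont: "continuous_on M Psi"
  using CPsi2 by (intro differentiable_imp_continuous_on) (simp add: Ck2_iff)

lemma dPsi_cont: "continuous_on M (\<lambda>p. fd Psi p X)"
  using CPsi2 by (intro differentiable_imp_continuous_on) (simp add: Ck2_iff)

lemma pb_cont: "continuous_on M (\<lambda>p. pullback Psi (kahler_form Xi) p X Y)"
  unfolding pullback_def
  by (rule kahler_cont[OF S CX2 Psi_cont _ dPsi_cont dPsi_cont]) (use PsiS in auto)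

lemma om_cont: "continuous_on M (\<lambda>p. kahler_form Phi p X Y)"
  using kahler_cont[OF M(1) CP2 continuous_on_id _ continuous_on_const continuous_on_const, of M X Y] by simp

context
  fixes c :: "'n \<Rightarrow> real"
  assumes R: "\<forall>x\<in>tilde M. (\<forall>j. x $ j > 0) \<longrightarrow> (\<forall>k.
           (psi k x)\<^sup>2 * pdx k Xit (\<chi> j. (psi j x)\<^sup>2 * x $ j) = pdx k Phit x + c k / x $ k)"
begin

lemma R': "z \<in> Om \<Longrightarrow> (psi k (sqmod z))\<^sup>2 * pdx k Xit (sqmod (Psi z)) = pdx k Phit (sqmod z) + c k / sqmod z $ k"
  using R Om_tilde[of z] Om_pos[of z] unfolding sqmod_Psi by (simp del: sqmod_nth)

lemma bwd_h:
  assumes z: "z \<in> Om" and nz: "\<forall>j. Psi z $ j \<noteq> 0"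
  shows "h k z = c k"
proof -
  have xk: "sqmod z $ k > 0" using Om_pos[OF z] .
  have "h k z = (psi k (sqmod z))\<^sup>2 * sqmod z $ k * pdx k Xit (sqmod (Psi z)) - sqmod z $ k * pdx k Phit (sqmod z)"
    unfolding h_def HX_def HP_def pdxX[OF z nz] pdxP[OF z] by (simp add: sqmod_Psi del: sqmod_nth)
  also have "\<dots> = c k" using R'[OF z, of k] xk by (simp add: field_simps del: sqmod_nth)
  finally show ?thesis .
qed

lemma bwd_HP:
  assumes z: "z \<in> Om" and P0: "Psi z $ k = 0"
  shows "HP k z = - c k"
proof -
  have xk: "sqmod z $ k > 0" using Om_pos[OF z] .
  have "psi k (sqmod z) = 0" using P0 Om_nz[OF z, of k] by (simp add: special_map_def)
  then have "0 = pdx k Phit (sqmod z) + c k / sqmod z $ k" using R'[OF z, of k] by simp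
  then show ?thesis unfolding HP_def pdxP[OF z, symmetric] using xk by (simp add: field_simps del: sqmod_nth)
qed

lemma dens2:
  assumes "finite F"
  shows "open W \<Longrightarrow> W \<subseteq> Om \<Longrightarrow> W \<noteq> {} \<Longrightarrow> \<exists>z\<in>W. \<forall>j\<in>F. Psi z $ j \<noteq> 0"
  using assms
proof (induction F arbitrary: W rule: finite_induct)
  case empty
  then show ?case by auto
next
  case (insert j F)
  define W1 where "W1 = W \<inter> (\<lambda>z. Psi z $ j) -` (- {0})"
  have cW: "continuous_on W (\<lambda>z. Psi z $ j)"
    using cont_nth[OF continuous_on_subset[OF Psi_cont]] insert.prems(2) Om_M by blast
  have oW1: "open W1" unfolding W1_def
    by (rule continuous_open_preimage[OF cW insert.prems(1)]) (simp add: open_Compl)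
  show ?case
  proof (cases "W1 = {}")
    case False
    have "W1 \<subseteq> Om" using insert.prems(2) by (auto simp: W1_def)
    then obtain z where z: "z \<in> W1" "\<forall>i\<in>F. Psi z $ i \<noteq> 0"
      using insert.IH[OF oW1 _ False] by blast
    then have "z \<in> W" "Psi z $ j \<noteq> 0" by (auto simp: W1_def)
    with z(2) show ?thesis by blast
  next
    case True
    then have Z: "\<forall>z\<in>W. Psi z $ j = 0" by (auto simp: W1_def)
    obtain p where p: "p \<in> W" using insert.prems(3) by blast
    have pO: "p \<in> Om" using p insert.prems(2) by blast
    have pM: "p \<in> M" using Om_M[OF pO] .
    have HPc: "\<And>z. z \<in> W \<Longrightarrow> - c j = HP j z"
    proof -
      fix z assume zW: "z \<in> W"
      then have "z \<in> Om" using insert.prems(2) by blast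
      then show "- c j = HP j z" using bwd_HP Z zW by simp
    qed
    have "(HP j has_derivative (\<lambda>_. 0)) (at p)"
      by (rule has_derivative_transform_within_open[OF has_derivative_const insert.prems(1) p HPc])
    then have fd0: "fd (HP j) p = (\<lambda>_. 0)" by (rule fd_eq)
    define A where "A = axis j (p$j)"
    have A0: "A \<noteq> 0" using Om_nz[OF pO] by (simp add: A_def)
    have "kahler_form Phi p A (\<chi> i. \<i> * A $ i) > 0" using kah pM A0 by blast
    moreover have "(\<chi> i. \<i> * A $ i) = axis j (\<i> * p$j)" by (simp add: A_def cJ_axis)
    ultimately have "kahler_form Phi p A (axis j (\<i> * p$j)) > 0" by simp
    moreover have "4 * kahler_form Phi p A (axis j (\<i> * p$j)) = 0" using om_Yk[OF pO, of A j] fd0 by simp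
    ultimately show ?thesis by simp
  qed
qed

lemma h_const: "z \<in> M \<Longrightarrow> h k z = c k"
proof (rule dense_eq[OF M(1) h_cont continuous_on_const, where P="\<lambda>z. z \<in> Om \<and> (\<forall>j. Psi z $ j \<noteq> 0)"])
  fix z e assume z: "z \<in> M" and e: "(e::real) > 0"
  obtain z1 where z1: "z1 \<in> M" "\<forall>j. z1$j \<noteq> 0" "dist z1 z < e" using dense_nz[OF M(1) z e] by blast
  define W where "W = ball z e \<inter> Om"
  have "open W" unfolding W_def using Om_open by auto
  moreover have "z1 \<in> W" using z1 by (auto simp: W_def Om_def dist_commute)
  then have "W \<noteq> {}" by blast
  moreover have "W \<subseteq> Om" by (simp add: W_def)
  ultimately obtain z' where "z' \<in> W" "\<forall>j\<in>UNIV. Psi z' $ j \<noteq> 0"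
    using dens2[of "UNIV::'n set" W] by auto
  then show "\<exists>z'. (z' \<in> Om \<and> (\<forall>j. Psi z' $ j \<noteq> 0)) \<and> z' \<in> M \<and> dist z' z < e"
    by (auto simp: W_def Om_def dist_commute)
qed (auto intro: bwd_h)

lemma backward: "\<forall>p\<in>M. \<forall>X Y. pullback Psi (kahler_form Xi) p X Y = kahler_form Phi p X Y"
proof (intro ballI allI)
  fix p X Y assume p: "p \<in> M"
  show "pullback Psi (kahler_form Xi) p X Y = kahler_form Phi p X Y"
  proof (rule dense_eq[OF M(1) pb_cont om_cont, where P="\<lambda>z. z \<in> Om"])
    fix z e assume "z \<in> M" "(e::real) > 0"
    then show "\<exists>z'. z' \<in> Om \<and> z' \<in> M \<and> dist z' z < e"
    proof -
      obtain z1 where "z1 \<in> M" "\<forall>j. z1$j \<noteq> 0" "dist z1 z < e" using dense_nz[OF M(1)] \<open>z \<in> M\<close> \<open>e > 0\<close> by blast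
      then show ?thesis by (intro exI[of _ z1]) (simp add: Om_def)
    qed
  next
    fix q assume q: "q \<in> M" "q \<in> Om"
    have fd0: "fd (h k) q = (\<lambda>_. 0)" for k
      by (rule fd_eq, rule has_derivative_transform_within_open[OF has_derivative_const M(1) q(1)])
         (simp add: h_const)
    show "pullback Psi (kahler_form Xi) q X Y = kahler_form Phi q X Y"
      using main_id[OF q(2), of X Y] fd0 by simp
  qed (rule p)
qed

end

end


theorem lemma2p1:
  fixes M S :: "(complex^'n) set"
    and Phi Xi :: "complex^'n \<Rightarrow> real"
    and Phit Xit :: "real^'n \<Rightarrow> real"
    and psi :: "'n \<Rightarrow> real^'n \<Rightarrow> real"
  assumes "is_domain M" and "is_domain S"
    and "is_kahler_on M Phi" and "is_kahler_on S Xi"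
    and "rot_inv_assoc M Phi Phit" and "rot_inv_assoc S Xi Xit"
    and "smooth_on M (special_map psi)"
    and "special_map psi ` M \<subseteq> S"
  shows "(\<forall>p\<in>M. \<forall>X Y. pullback (special_map psi) (kahler_form Xi) p X Y = kahler_form Phi p X Y)
     \<longleftrightarrow> (\<exists>c :: 'n \<Rightarrow> real. \<forall>x\<in>tilde M. (\<forall>j. x $ j > 0) \<longrightarrow> (\<forall>k.
           (psi k x)\<^sup>2 * pdx k Xit (\<chi> j. (psi j x)\<^sup>2 * x $ j) = pdx k Phit x + c k / x $ k))"
proof -
  obtain UP gP where UP: "open UP" "tilde M \<subseteq> UP" "smooth_on UP gP" "\<forall>x\<in>tilde M. gP x = Phit x"
    using assms(5) unfolding rot_inv_assoc_def smooth_on_set_def by metis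
  obtain UX gX where UX: "open UX" "tilde S \<subseteq> UX" "smooth_on UX gX" "\<forall>x\<in>tilde S. gX x = Xit x"
    using assms(6) unfolding rot_inv_assoc_def smooth_on_set_def by metis
  interpret LL M S Phi Xi Phit Xit gP gX UP UX psi
  proof
    show "open M" "connected M" using assms(1) by (auto simp: is_domain_def)
    show "open S" using assms(2) by (auto simp: is_domain_def)
    show "smooth_on M Phi" "smooth_on S Xi" using assms(3,4) by (auto simp: is_kahler_on_def)
    show "open UP" "tilde M \<subseteq> UP" "smooth_on UP gP" "\<forall>x\<in>tilde M. gP x = Phit x" by (fact UP)+
    show "open UX" "tilde S \<subseteq> UX" "smooth_on UX gX" "\<forall>x\<in>tilde S. gX x = Xit x" by (fact UX)+
    show "\<forall>z\<in>M. Phi z = Phit (sqmod z)" "\<forall>z\<in>S. Xi z = Xit (sqmod z)"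
      using assms(5,6) by (auto simp: rot_inv_assoc_def)
    show "smooth_on M (special_map psi)" "special_map psi ` M \<subseteq> S" by (fact assms(7,8))+
    show "\<forall>p\<in>M. \<forall>X. X \<noteq> 0 \<longrightarrow> kahler_form Phi p X (\<chi> j. \<i> * X $ j) > 0"
      using assms(3) by (auto simp: is_kahler_on_def)
  qed
  show ?thesis using forward backward by blast
qed


end
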